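(* Let $S$ be a finite tree and $v$ a vertex of $S$. Let $T$ be the multigraph obtained from $S$ by gluing all leaves of $S$, except $v$ in case $v$ is a leaf, into a single vertex $\partial$, which is the boundary vertex of $T$. Let $Y$ be the loop contracting random walk on $(T,\partial)$ started at $v$ and $X$ the simple random walk on $T$ started at $v$. Then $$\mathbb{P}\big(\tau^{Y}_\partial<\tau^{Y}_{v,+}\big)\ \ge\ \mathbb{P}\big(\tau^{X}_\partial<\tau^{X}_{v,+}\big).$$
   Context: Simple random walk on a multigraph: at each step move along an outgoing oriented edge chosen uniformly at random, counting multiplicities. $\tau^X_\partial$ is the first hitting time of $\partial$ and $\tau^X_{v,+}$ the first time $t\ge1$ with $X_t=v$. Contraction of an oriented cycle $C$: remove the vertices of $C$ and all oriented edges with both endpoints in $C$, add a new vertex $v_C$, and replace each oriented edge with exactly one endpoint in $C$ by the edge with that endpoint replaced by $v_C$. Loop contracting random walk (LCRW) on $(G,\partial)$ started at $x\ne\partial$: a sequence $(G_i,P_i,X_i)$ with $G_0=G$, $P_0$ the empty path at $x$, $X_0=x$; at each step choose uniformly at random (counting multiplicity) an outgoing oriented edge $\vec e$ of $X_i$ in $G_i$; if the head of $\vec e$ is a vertex $y$ of the simple path $P_i$, contract the cycle formed by the part of $P_i$ from $y$ to $X_i$ and $\vec e$ to get $G_{i+1}$, truncate $P_i$ at $y$ to get $P_{i+1}$, and set $X_{i+1}=v_C$; otherwise $G_{i+1}=G_i$, $P_{i+1}$ is $P_i$ extended by $\vec e$, $X_{i+1}$ is the head of $\vec e$; terminate when $X_{i+1}=\partial$.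 For the LCRW $Y$ started at $v$, $\tau^Y_\partial$ is the time at which it reaches $\partial$, and $\tau^Y_{v,+}$ is the first step at which the chosen edge has head $v$ (i.e. the walk returns to $v$; before this time $v$ has not been part of any contracted cycle). *)

theory Defs
  imports "HOL-Probability.Probability"
begin

definition simple_graph :: "'a set \<Rightarrow> ('a \<Rightarrow> 'a \<Rightarrow> bool) \<Rightarrow> bool" where
  "simple_graph V E \<longleftrightarrow> finite V \<and> (\<forall>x y. E x y \<longrightarrow> x \<in> V \<and> y \<in> V \<and> x \<noteq> y \<and> E y x)"

definition is_cycle :: "('a \<Rightarrow> 'a \<Rightarrow> bool) \<Rightarrow> 'a list \<Rightarrow> bool" where
  "is_cycle E xs \<longleftrightarrow> 3 \<le> length xs \<and> distinct xs \<and>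
     (\<forall>i. Suc i < length xs \<longrightarrow> E (xs ! i) (xs ! Suc i)) \<and> E (last xs) (hd xs)"

definition finite_tree :: "'a set \<Rightarrow> ('a \<Rightarrow> 'a \<Rightarrow> bool) \<Rightarrow> bool" where
  "finite_tree V E \<longleftrightarrow> simple_graph V E \<and> V \<noteq> {} \<and>
     (\<forall>x\<in>V. \<forall>y\<in>V. E\<^sup>*\<^sup>* x y) \<and> \<not> (\<exists>xs. is_cycle E xs)"

definition is_leaf :: "('a \<Rightarrow> 'a \<Rightarrow> bool) \<Rightarrow> 'a \<Rightarrow> bool" where
  "is_leaf E x \<longleftrightarrow> card {y. E x y} = 1"

text \<open>Vertices of T are of type 'a option; None is the boundary vertex (all leaves except v glued).
  Oriented edges of T are identified with the oriented edges (x,y) of S (multiplicities counted).\<close>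

definition glue :: "('a \<Rightarrow> 'a \<Rightarrow> bool) \<Rightarrow> 'a \<Rightarrow> 'a \<Rightarrow> 'a option" where
  "glue E v x = (if is_leaf E x \<and> x \<noteq> v then None else Some x)"

definition T_edges :: "('a \<Rightarrow> 'a \<Rightarrow> bool) \<Rightarrow> ('a \<times> 'a) set" where
  "T_edges E = {(x, y). E x y}"

definition T_tail :: "('a \<Rightarrow> 'a \<Rightarrow> bool) \<Rightarrow> 'a \<Rightarrow> 'a \<times> 'a \<Rightarrow> 'a option" where
  "T_tail E v e = glue E v (fst e)"

definition T_head :: "('a \<Rightarrow> 'a \<Rightarrow> bool) \<Rightarrow> 'a \<Rightarrow> 'a \<times> 'a \<Rightarrow> 'a option" where
  "T_head E v e = glue E v (snd e)"

text \<open>Run s: still running; Esc: reached the boundary before returning to the start;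
  Ret: returned to the start before reaching the boundary.\<close>
datatype 's wstate = Run 's | Esc | Ret

text \<open>Multigraph: finite set Ed of oriented edge identifiers with tail tlf and head hdf.\<close>

definition srw_step ::
  "'e set \<Rightarrow> ('e \<Rightarrow> 'v) \<Rightarrow> ('e \<Rightarrow> 'v) \<Rightarrow> 'v \<Rightarrow> 'v \<Rightarrow> 'v wstate \<Rightarrow> 'v wstate pmf" where
  "srw_step Ed tlf hdf v bd s = (case s of
     Run x \<Rightarrow>
       (let out = {e \<in> Ed. tlf e = x} in
        if out = {} then return_pmf s else
        map_pmf (\<lambda>e. if hdf e = v then Ret else if hdf e = bd then Esc else Run (hdf e))
                (pmf_of_set out))
   | _ \<Rightarrow> return_pmf s)"

text \<open>LCRW state: (remaining edges R, block map blk sending each original vertex to the vertex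
  of the current graph containing it -- a contracted vertex v_C is the union of the blocks of C --,
  simple path P as a list of current vertices, whose last element is the current position).\<close>

definition lcrw_step ::
  "'e set \<Rightarrow> ('e \<Rightarrow> 'v) \<Rightarrow> ('e \<Rightarrow> 'v) \<Rightarrow> 'v \<Rightarrow> 'v \<Rightarrow>
   ('e set \<times> ('v \<Rightarrow> 'v set) \<times> 'v set list) wstate \<Rightarrow>
   ('e set \<times> ('v \<Rightarrow> 'v set) \<times> 'v set list) wstate pmf" where
  "lcrw_step Ed tlf hdf v bd s = (case s of
     Run (R, blk, P) \<Rightarrow>
       (let out = {e \<in> R. blk (tlf e) = last P} in
        if out = {} then return_pmf s else
        map_pmf (\<lambda>e. let h = blk (hdf e) in
            if h = {v} then Ret
            else if h = {bd} then Esc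
            else if h \<in> set P then
              (let C = set (dropWhile (\<lambda>b. b \<noteq> h) P);
                   vC = \<Union>C
               in Run ({e' \<in> R. \<not> (blk (tlf e') \<in> C \<and> blk (hdf e') \<in> C)},
                       (\<lambda>x. if blk x \<in> C then vC else blk x),
                       takeWhile (\<lambda>b. b \<noteq> h) P @ [vC]))
            else Run (R, blk, P @ [h]))
          (pmf_of_set out))
   | _ \<Rightarrow> return_pmf s)"

definition escape_prob :: "('s wstate \<Rightarrow> 's wstate pmf) \<Rightarrow> 's \<Rightarrow> real" where
  "escape_prob step s0 = (SUP n. pmf (((\<lambda>p. bind_pmf p step) ^^ n) (return_pmf (Run s0))) Esc)"

definition srw_escape :: "'e set \<Rightarrow> ('e \<Rightarrow> 'v) \<Rightarrow> ('e \<Rightarrow> 'v) \<Rightarrow> 'v \<Rightarrow> 'v \<Rightarrow> real" where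
  "srw_escape Ed tlf hdf v bd = escape_prob (srw_step Ed tlf hdf v bd) v"

definition lcrw_escape :: "'e set \<Rightarrow> ('e \<Rightarrow> 'v) \<Rightarrow> ('e \<Rightarrow> 'v) \<Rightarrow> 'v \<Rightarrow> 'v \<Rightarrow> real" where
  "lcrw_escape Ed tlf hdf v bd = escape_prob (lcrw_step Ed tlf hdf v bd) (Ed, (\<lambda>x. {x}), [{v}])"

end

theory Submission
  imports Defs
begin


definition iterp :: "('s wstate \<Rightarrow> 's wstate pmf) \<Rightarrow> nat \<Rightarrow> 's wstate pmf \<Rightarrow> 's wstate pmf" where
  "iterp step n = ((\<lambda>p. bind_pmf p step) ^^ n)"

definition Pe :: "('s wstate \<Rightarrow> 's wstate pmf) \<Rightarrow> nat \<Rightarrow> 's wstate \<Rightarrow> real" where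
  "Pe step n s = pmf (iterp step n (return_pmf s)) Esc"

lemma iterp_bind: "iterp step n (bind_pmf q f) = bind_pmf q (\<lambda>x. iterp step n (f x))"
proof (induction n arbitrary: q f)
  case 0 then show ?case by (simp add: iterp_def)
next
  case (Suc n)
  have "iterp step (Suc n) (bind_pmf q f) = iterp step n (bind_pmf (bind_pmf q f) step)"
    by (simp add: iterp_def funpow_Suc_right del: funpow.simps)
  also have "\<dots> = iterp step n (bind_pmf q (\<lambda>x. bind_pmf (f x) step))"
    by (simp add: bind_assoc_pmf)
  also have "\<dots> = bind_pmf q (\<lambda>x. iterp step n (bind_pmf (f x) step))" by (rule Suc)
  also have "\<dots> = bind_pmf q (\<lambda>x. iterp step (Suc n) (f x))"
    by (simp add: iterp_def funpow_Suc_right del: funpow.simps)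
  finally show ?case .
qed

lemma iterp_Suc_return: "iterp step (Suc n) (return_pmf s) = bind_pmf (step s) (\<lambda>x. iterp step n (return_pmf x))"
proof -
  have "iterp step (Suc n) (return_pmf s) = iterp step n (bind_pmf (return_pmf s) step)"
    by (simp add: iterp_def funpow_Suc_right del: funpow.simps)
  also have "\<dots> = iterp step n (bind_pmf (step s) return_pmf)" by (simp add: bind_return_pmf bind_return_pmf')
  also have "\<dots> = bind_pmf (step s) (\<lambda>x. iterp step n (return_pmf x))" by (rule iterp_bind)
  finally show ?thesis .
qed

lemma iterp_absorb: "step s = return_pmf s \<Longrightarrow> iterp step n (return_pmf s) = return_pmf s"
  by (induction n) (simp_all add: iterp_Suc_return bind_return_pmf, simp add: iterp_def)

lemma Pe_Suc: "Pe step (Suc n) s = measure_pmf.expectation (step s) (Pe step n)"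
  unfolding Pe_def iterp_Suc_return pmf_bind by simp

lemma Pe_0: "Pe step 0 s = (if s = Esc then 1 else 0)"
  by (simp add: Pe_def iterp_def pmf_return)

lemma Pe_Esc: "step Esc = return_pmf Esc \<Longrightarrow> Pe step n Esc = 1"
  by (simp add: Pe_def iterp_absorb)

lemma Pe_Ret: "step Ret = return_pmf Ret \<Longrightarrow> Pe step n Ret = 0"
  by (simp add: Pe_def iterp_absorb)

lemma Pe_nonneg: "0 \<le> Pe step n s" by (simp add: Pe_def)
lemma Pe_le1: "Pe step n s \<le> 1" by (simp add: Pe_def pmf_le_1)

lemma escape_prob_Pe: "escape_prob step s0 = (SUP n. Pe step n (Run s0))"
  by (simp add: escape_prob_def Pe_def iterp_def)

lemma upper_bound:
  assumes absE: "step Esc = return_pmf Esc" and absR: "step Ret = return_pmf Ret"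
  and HE: "H Esc \<ge> 1" and HR: "H Ret \<ge> 0"
  and inv: "\<And>s s'. I s \<Longrightarrow> s' \<in> set_pmf (step (Run s)) \<Longrightarrow> (case s' of Run t \<Rightarrow> I t | _ \<Rightarrow> True)"
  and fin: "\<And>s. I s \<Longrightarrow> finite (set_pmf (step (Run s)))"
  and nn: "\<And>s. I s \<Longrightarrow> H (Run s) \<ge> 0"
  and sup: "\<And>s. I s \<Longrightarrow> measure_pmf.expectation (step (Run s)) H \<le> H (Run s)"
  shows "I s \<Longrightarrow> Pe step n (Run s) \<le> H (Run s)"
proof (induction n arbitrary: s)
  case 0 then show ?case using nn by (simp add: Pe_0)
next
  case (Suc n)
  have "Pe step (Suc n) (Run s) = measure_pmf.expectation (step (Run s)) (Pe step n)" by (rule Pe_Suc)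
  also have "\<dots> = (\<Sum>a\<in>set_pmf (step (Run s)). Pe step n a * pmf (step (Run s)) a)"
    by (rule integral_measure_pmf_real) (use fin Suc.prems in auto)
  also have "\<dots> \<le> (\<Sum>a\<in>set_pmf (step (Run s)). H a * pmf (step (Run s)) a)"
  proof (rule sum_mono)
    fix a assume a: "a \<in> set_pmf (step (Run s))"
    have "Pe step n a \<le> H a"
    proof (cases a)
      case (Run t) then show ?thesis using Suc.IH inv[OF Suc.prems a] by auto
    next
      case Esc then show ?thesis using HE Pe_Esc[of step, OF absE] by simp
    next
      case Ret then show ?thesis using HR Pe_Ret[of step, OF absR] by simp
    qed
    then show "Pe step n a * pmf (step (Run s)) a \<le> H a * pmf (step (Run s)) a"
      by (simp add: mult_right_mono)
  qed
  also have "\<dots> = measure_pmf.expectation (step (Run s)) H"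
    by (rule integral_measure_pmf_real[symmetric]) (use fin Suc.prems in auto)
  also have "\<dots> \<le> H (Run s)" using sup Suc.prems by blast
  finally show ?case .
qed

lemma lower_bound:
  assumes absE: "step Esc = return_pmf Esc" and absR: "step Ret = return_pmf Ret"
  and HE: "H Esc \<le> 1" and HR: "H Ret \<le> 0"
  and inv: "\<And>s s'. I s \<Longrightarrow> s' \<in> set_pmf (step (Run s)) \<Longrightarrow> (case s' of Run t \<Rightarrow> I t \<and> rk t < rk s | _ \<Rightarrow> True)"
  and fin: "\<And>s. I s \<Longrightarrow> finite (set_pmf (step (Run s)))"
  and sub: "\<And>s. I s \<Longrightarrow> measure_pmf.expectation (step (Run s)) H \<ge> H (Run s)"
  shows "I s \<Longrightarrow> rk s < n \<Longrightarrow> Pe step n (Run s) \<ge> H (Run s)"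
proof (induction n arbitrary: s)
  case 0 then show ?case by simp
next
  case (Suc n)
  have "H (Run s) \<le> measure_pmf.expectation (step (Run s)) H" using sub Suc.prems by blast
  also have "\<dots> = (\<Sum>a\<in>set_pmf (step (Run s)). H a * pmf (step (Run s)) a)"
    by (rule integral_measure_pmf_real) (use fin Suc.prems in auto)
  also have "\<dots> \<le> (\<Sum>a\<in>set_pmf (step (Run s)). Pe step n a * pmf (step (Run s)) a)"
  proof (rule sum_mono)
    fix a assume a: "a \<in> set_pmf (step (Run s))"
    have "H a \<le> Pe step n a"
    proof (cases a)
      case (Run t) then show ?thesis using Suc.IH inv[OF Suc.prems(1) a] Suc.prems(2) by auto
    next
      case Esc then show ?thesis using HE Pe_Esc[of step, OF absE] by simp
    next
      case Ret then show ?thesis using HR Pe_Ret[of step, OF absR] by simp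
    qed
    then show "H a * pmf (step (Run s)) a \<le> Pe step n a * pmf (step (Run s)) a"
      by (simp add: mult_right_mono)
  qed
  also have "\<dots> = measure_pmf.expectation (step (Run s)) (Pe step n)"
    by (rule integral_measure_pmf_real[symmetric]) (use fin Suc.prems in auto)
  also have "\<dots> = Pe step (Suc n) (Run s)" by (rule Pe_Suc[symmetric])
  finally show ?case .
qed

lemma escape_le: "(\<And>n. Pe step n (Run s0) \<le> c) \<Longrightarrow> escape_prob step s0 \<le> c"
  unfolding escape_prob_Pe by (rule cSUP_least) auto

lemma escape_ge: "c \<le> Pe step n (Run s0) \<Longrightarrow> c \<le> escape_prob step s0"
  unfolding escape_prob_Pe
  by (rule order_trans, assumption, rule cSUP_upper) (auto intro: bdd_aboveI[where M=1] simp: Pe_le1)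

lemma expectation_map_pmf_of_set:
  assumes "finite A" "A \<noteq> {}"
  shows "measure_pmf.expectation (map_pmf f (pmf_of_set A)) H = (\<Sum>e\<in>A. H (f e)) / card A"
  using assms by (simp add: integral_map_pmf integral_pmf_of_set)



fun nbw :: "('a \<Rightarrow> 'a \<Rightarrow> bool) \<Rightarrow> 'a list \<Rightarrow> bool" where
  "nbw E (a # b # c # r) = (E a b \<and> a \<noteq> c \<and> nbw E (b # c # r))"
| "nbw E [a, b] = E a b"
| "nbw E _ = True"

lemma nbw_Cons: "nbw E (a # xs) = (nbw E xs \<and> (xs \<noteq> [] \<longrightarrow> E a (hd xs)) \<and> (length xs \<ge> 2 \<longrightarrow> xs ! 1 \<noteq> a))"
  by (cases xs; cases "tl xs") auto

lemma nbw_append: "nbw E (xs @ ys) = (nbw E xs \<and> nbw E ys \<and>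
   (xs \<noteq> [] \<and> ys \<noteq> [] \<longrightarrow> E (last xs) (hd ys)) \<and>
   (length xs \<ge> 2 \<and> ys \<noteq> [] \<longrightarrow> last (butlast xs) \<noteq> hd ys) \<and>
   (xs \<noteq> [] \<and> length ys \<ge> 2 \<longrightarrow> ys ! 1 \<noteq> last xs))"
proof (induction xs)
  case Nil then show ?case by simp
next
  case (Cons a xs)
  show ?case
  proof (cases xs)
    case Nil then show ?thesis by (cases ys) (auto simp: nbw_Cons)
  next
    case (Cons b zs)
    show ?thesis
    proof (cases zs)
      case Nil then show ?thesis using \<open>xs = b # zs\<close> Cons.IH
        by (cases ys) (auto simp: nbw_Cons)
    next
      case (Cons c ws)
      have "nbw E (a # xs @ ys) = (nbw E (xs @ ys) \<and> E a b \<and> c \<noteq> a)"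
        using \<open>xs = b # zs\<close> Cons by (simp add: nbw_Cons)
      moreover have "nbw E (a # xs) = (nbw E xs \<and> E a b \<and> c \<noteq> a)"
        using \<open>xs = b # zs\<close> Cons by (simp add: nbw_Cons)
      moreover have "last (a # xs) = last xs" "butlast (a # xs) = a # butlast xs" "last (a # butlast xs) = last (butlast xs)"
        using \<open>xs = b # zs\<close> Cons by auto
      ultimately show ?thesis using Cons.IH \<open>xs = b # zs\<close> Cons by (simp; blast)
    qed
  qed
qed

lemma nbw_snoc: "nbw E (xs @ [y]) = (nbw E xs \<and> (xs \<noteq> [] \<longrightarrow> E (last xs) y) \<and>
   (length xs \<ge> 2 \<longrightarrow> last (butlast xs) \<noteq> y))"
  by (simp add: nbw_append)

lemma nbw_nth_E: "nbw E xs \<Longrightarrow> Suc i < length xs \<Longrightarrow> E (xs ! i) (xs ! Suc i)"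
proof (induction xs arbitrary: i)
  case Nil then show ?case by simp
next
  case (Cons a xs) then show ?case
    by (cases i) (auto simp: nbw_Cons hd_conv_nth)
qed

lemma nbw_nth_ne: "nbw E xs \<Longrightarrow> Suc (Suc i) < length xs \<Longrightarrow> xs ! Suc (Suc i) \<noteq> xs ! i"
proof (induction xs arbitrary: i)
  case Nil then show ?case by simp
next
  case (Cons a xs) then show ?case
    by (cases i) (auto simp: nbw_Cons)
qed

lemma nbw_rev: assumes sym: "\<And>x y. E x y \<Longrightarrow> E y x" shows "nbw E (rev xs) = nbw E xs"
proof (induction xs)
  case Nil then show ?case by simp
next
  case (Cons a xs)
  have 1: "xs \<noteq> [] \<Longrightarrow> last (rev xs) = hd xs" by (simp add: last_rev)
  have 2: "length xs \<ge> 2 \<Longrightarrow> last (butlast (rev xs)) = xs ! 1"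
    by (cases xs; cases "tl xs") (auto simp: butlast_append)
  have "nbw E (rev (a # xs)) = (nbw E xs \<and> (xs \<noteq> [] \<longrightarrow> E (hd xs) a) \<and> (length xs \<ge> 2 \<longrightarrow> xs ! 1 \<noteq> a))"
    using Cons 1 2 by (auto simp: nbw_snoc)
  then show ?case using sym by (auto simp: nbw_Cons)
qed

lemma nbw_prefix: "nbw E (xs @ ys) \<Longrightarrow> nbw E xs" by (simp add: nbw_append)
lemma nbw_suffix: "nbw E (xs @ ys) \<Longrightarrow> nbw E ys" by (simp add: nbw_append)

lemma hd_butlast2: "length xs \<ge> 2 \<Longrightarrow> hd (butlast xs) = hd xs"
  by (cases xs; cases "tl xs") auto

lemma split2: "length xs \<ge> 2 \<Longrightarrow> \<exists>as a b. xs = as @ [a, b]"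
proof -
  assume l: "length xs \<ge> 2"
  obtain ys y where 1: "xs = ys @ [y]" using l by (cases xs rule: rev_cases) auto
  then have "ys \<noteq> []" using l by auto
  then obtain zs z where "ys = zs @ [z]" by (cases ys rule: rev_cases) auto
  then show ?thesis using 1 by auto
qed

lemma distinct_hd_last: "distinct xs \<Longrightarrow> length xs \<ge> 2 \<Longrightarrow> hd xs \<noteq> last xs"
  by (cases xs) (auto simp: last_in_set dest: last_in_set)

locale tctx =
  fixes V :: "'a set" and E :: "'a \<Rightarrow> 'a \<Rightarrow> bool" and v :: 'a
  assumes tree: "finite_tree V E" and vV: "v \<in> V" and card2: "2 \<le> card V"
begin

lemma finV: "finite V" using tree by (simp add: finite_tree_def simple_graph_def)
lemma EV: "E x y \<Longrightarrow> x \<in> V \<and> y \<in> V \<and> x \<noteq> y \<and> E y x"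
  using tree by (simp add: finite_tree_def simple_graph_def)
lemma Esym: "E x y \<Longrightarrow> E y x" using EV by blast
lemma conn: "x \<in> V \<Longrightarrow> y \<in> V \<Longrightarrow> E\<^sup>*\<^sup>* x y" using tree by (simp add: finite_tree_def)
lemma nocyc: "\<not> is_cycle E xs" using tree by (simp add: finite_tree_def)

lemma nbw_distinct: "nbw E xs \<Longrightarrow> distinct xs"
proof (induction xs rule: rev_induct)
  case Nil then show ?case by simp
next
  case (snoc z ys)
  have nb: "nbw E ys" using snoc.prems nbw_prefix by blast
  have dys: "distinct ys" using snoc.IH nb by blast
  show ?case
  proof (rule ccontr)
    assume "\<not> distinct (ys @ [z])"
    then have "z \<in> set ys" using dys by simp
    then obtain i where i: "i < length ys" "ys ! i = z" by (auto simp: in_set_conv_nth)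
    define m where "m = length ys - i"
    have xsi: "\<And>j. j < length ys \<Longrightarrow> (ys @ [z]) ! j = ys ! j" by (simp add: nth_append)
    have xsl: "(ys @ [z]) ! length ys = z" by simp
    consider "m = 1" | "m = 2" | "m \<ge> 3" using i m_def by linarith
    then show False
    proof cases
      case 1
      then have "i = length ys - 1" "Suc i = length ys" using m_def i by auto
      then have "E ((ys @ [z]) ! i) ((ys @ [z]) ! Suc i)" using nbw_nth_E[OF snoc.prems, of i]
        by simp
      then have "E z z" using i xsi xsl \<open>Suc i = length ys\<close> by auto
      then show False using EV by blast
    next
      case 2
      then have "Suc (Suc i) = length ys" using m_def i by auto
      then have "(ys @ [z]) ! Suc (Suc i) \<noteq> (ys @ [z]) ! i" using nbw_nth_ne[OF snoc.prems, of i]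
        by simp
      then show False using i xsi xsl \<open>Suc (Suc i) = length ys\<close> by auto
    next
      case 3
      define cyc where "cyc = drop i ys"
      have lc: "length cyc = m" by (simp add: cyc_def m_def)
      have "is_cycle E cyc"
        unfolding is_cycle_def
      proof (intro conjI allI impI)
        show "3 \<le> length cyc" using lc 3 by simp
        show "distinct cyc" using dys by (simp add: cyc_def)
      next
        fix j assume j: "Suc j < length cyc"
        have "E ((ys @ [z]) ! (i + j)) ((ys @ [z]) ! Suc (i + j))"
          using nbw_nth_E[OF snoc.prems, of "i + j"] j lc m_def by simp
        then show "E (cyc ! j) (cyc ! Suc j)" using j lc m_def i
          by (simp add: cyc_def xsi)
      next
        have sl: "Suc (length ys - 1) = length ys" using i by simp
        have "E (ys ! (length ys - 1)) z" using nbw_nth_E[OF snoc.prems, of "length ys - 1"] i sl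
          by (simp add: nth_append)
        moreover have "last cyc = ys ! (length ys - 1)" using i lc 3 m_def
          by (simp add: cyc_def last_conv_nth)
        moreover have "hd cyc = z" using i by (simp add: cyc_def hd_drop_conv_nth)
        ultimately show "E (last cyc) (hd cyc)" by simp
      qed
      then show False using nocyc by blast
    qed
  qed
qed

lemma nbw_set: "nbw E xs \<Longrightarrow> length xs \<ge> 2 \<Longrightarrow> set xs \<subseteq> V"
proof
  fix x assume nb: "nbw E xs" and l: "length xs \<ge> 2" and x: "x \<in> set xs"
  then obtain i where i: "i < length xs" "xs ! i = x" by (auto simp: in_set_conv_nth)
  show "x \<in> V"
  proof (cases "Suc i < length xs")
    case True then show ?thesis using nbw_nth_E[OF nb True] EV i by blast
  next
    case False
    then have "Suc (i - 1) < length xs" "Suc (i - 1) = i" using l i by auto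
    then show ?thesis using nbw_nth_E[OF nb, of "i - 1"] EV i by auto
  qed
qed

lemma walk_exists: "y \<in> V \<Longrightarrow> \<exists>ws. nbw E ws \<and> ws \<noteq> [] \<and> hd ws = v \<and> last ws = y"
proof -
  assume "y \<in> V"
  then have "E\<^sup>*\<^sup>* v y" using conn vV by blast
  then show ?thesis
  proof (induction rule: rtranclp_induct)
    case base then show ?case by (intro exI[of _ "[v]"]) simp
  next
    case (step x y)
    then obtain ws where ws: "nbw E ws" "ws \<noteq> []" "hd ws = v" "last ws = x" by blast
    show ?case
    proof (cases "length ws \<ge> 2 \<and> last (butlast ws) = y")
      case True
      have "nbw E (butlast ws)" using ws(1) nbw_prefix[of E "butlast ws" "[last ws]"] ws(2) by simp
      moreover have "length ws \<ge> 2" using True by blast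
      then have "length (butlast ws) \<ge> 1" by simp
      then have "butlast ws \<noteq> []" by (metis list.size(3) not_one_le_zero)
      moreover have "hd (butlast ws) = v" using True ws by (auto simp: hd_butlast2)
      ultimately show ?thesis using True by blast
    next
      case False
      have "nbw E (ws @ [y])" using ws False step.hyps(2) by (auto simp: nbw_snoc)
      then show ?thesis using ws by (intro exI[of _ "ws @ [y]"]) auto
    qed
  qed
qed

lemma walk_uniq: "nbw E w1 \<Longrightarrow> w1 \<noteq> [] \<Longrightarrow> hd w1 = v \<Longrightarrow> nbw E w2 \<Longrightarrow> w2 \<noteq> [] \<Longrightarrow> hd w2 = v
   \<Longrightarrow> last w1 = last w2 \<Longrightarrow> w1 = w2"
proof (induction "length w1" arbitrary: w1 w2 rule: less_induct)
  case less
  have d1: "distinct w1" "distinct w2" using less.prems nbw_distinct by auto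
  show ?case
  proof (cases "length w1 \<ge> 2 \<and> length w2 \<ge> 2")
    case False
    then consider "length w1 = 1" | "length w2 = 1" using less.prems
      by (metis One_nat_def length_0_conv less_2_cases not_le)
    then show ?thesis
    proof cases
      case 1
      then obtain a where "w1 = [a]" by (metis One_nat_def length_0_conv length_Suc_conv)
      then have "last w2 = hd w2" using less.prems by simp
      then have "length w2 < 2" using distinct_hd_last d1 by force
      then have "length w2 = 1" using less.prems by (cases w2) auto
      then obtain b where "w2 = [b]" by (metis One_nat_def length_0_conv length_Suc_conv)
      then show ?thesis using \<open>w1 = [a]\<close> less.prems by simp
    next
      case 2
      then obtain a where "w2 = [a]" by (metis One_nat_def length_0_conv length_Suc_conv)
      then have "last w1 = hd w1" using less.prems by simp
      then have "length w1 < 2" using distinct_hd_last d1 by force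
      then have "length w1 = 1" using less.prems by (cases w1) auto
      then obtain b where "w1 = [b]" by (metis One_nat_def length_0_conv length_Suc_conv)
      then show ?thesis using \<open>w2 = [a]\<close> less.prems by simp
    qed
  next
    case True
    obtain as a x where w1: "w1 = as @ [a, x]" using True split2 by blast
    obtain bs b x' where w2: "w2 = bs @ [b, x']" using True split2 by blast
    have xx: "x' = x" using less.prems w1 w2 by simp
    show ?thesis
    proof (cases "a = b")
      case True
      have "as @ [a] = bs @ [b]"
      proof (rule less.hyps)
        show "length (as @ [a]) < length w1" using w1 by simp
        show "nbw E (as @ [a])" using less.prems(1) w1 nbw_prefix[of E "as @ [a]" "[x]"] by simp
        show "nbw E (bs @ [b])" using less.prems(4) w2 nbw_prefix[of E "bs @ [b]" "[x']"] by simp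
        show "hd (as @ [a]) = v" using less.prems(3) w1 by (cases as) auto
        show "hd (bs @ [b]) = v" using less.prems(6) w2 by (cases bs) auto
      qed (use True in auto)
      then show ?thesis using w1 w2 xx by simp
    next
      case False
      define w where "w = w1 @ rev (bs @ [b])"
      have nb2: "nbw E (bs @ [b])" using less.prems(4) w2 nbw_prefix[of E "bs @ [b]" "[x']"] by simp
      have nb2r: "nbw E (rev (bs @ [b]))" using nb2 nbw_rev[of E] Esym by blast
      have Exb: "E x b" using nbw_suffix[of E bs "[b, x]"] less.prems(4) w2 xx Esym by simp
      have lbx: "bs \<noteq> [] \<Longrightarrow> last bs \<noteq> x"
      proof -
        assume "bs \<noteq> []"
        have "nbw E ((bs @ [b]) @ [x])" using less.prems(4) w2 xx by simp
        then have "last (butlast (bs @ [b])) \<noteq> x" using \<open>bs \<noteq> []\<close>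
          unfolding nbw_snoc by (cases bs) auto
        then show ?thesis by simp
      qed
      have r1: "rev (bs @ [b]) \<noteq> []" "hd (rev (bs @ [b])) = b" by simp_all
      have r2: "length (rev (bs @ [b])) \<ge> 2 \<Longrightarrow> rev (bs @ [b]) ! 1 = last bs"
        by (cases bs rule: rev_cases) auto
      have r3: "last (butlast w1) = a" "last w1 = x" using w1 by (simp_all add: butlast_append)
      have "nbw E w" unfolding w_def nbw_append
      proof (intro conjI impI)
        show "nbw E w1" by (rule less.prems(1))
        show "nbw E (rev (bs @ [b]))" by (rule nb2r)
        show "E (last w1) (hd (rev (bs @ [b])))" using Exb r1 r3 by simp
        show "last (butlast w1) \<noteq> hd (rev (bs @ [b]))" using False r1 r3 by simp
        assume "w1 \<noteq> [] \<and> 2 \<le> length (rev (bs @ [b]))"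
        then have "bs \<noteq> []" by auto
        then show "rev (bs @ [b]) ! 1 \<noteq> last w1" using r2 r3 lbx
          using \<open>w1 \<noteq> [] \<and> 2 \<le> length (rev (bs @ [b]))\<close> by simp
      qed
      then have "distinct w" by (rule nbw_distinct)
      moreover have "hd w = v" using less.prems(3) w1 by (cases as) (auto simp: w_def)
      moreover have "last w = v" using less.prems(6) w2 by (cases bs) (auto simp: w_def)
      moreover have "length w \<ge> 2" using w1 by (simp add: w_def)
      ultimately show ?thesis using distinct_hd_last by metis
    qed
  qed
qed

definition rw :: "'a \<Rightarrow> 'a list" where
  "rw x = (THE ws. nbw E ws \<and> ws \<noteq> [] \<and> hd ws = v \<and> last ws = x)"

lemma rw_props: assumes "x \<in> V" shows "nbw E (rw x)" "rw x \<noteq> []" "hd (rw x) = v" "last (rw x) = x"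
proof -
  have "\<exists>!ws. nbw E ws \<and> ws \<noteq> [] \<and> hd ws = v \<and> last ws = x"
    using walk_exists[OF assms] walk_uniq by metis
  then have "nbw E (rw x) \<and> rw x \<noteq> [] \<and> hd (rw x) = v \<and> last (rw x) = x"
    unfolding rw_def by (rule theI')
  then show "nbw E (rw x)" "rw x \<noteq> []" "hd (rw x) = v" "last (rw x) = x" by auto
qed

lemma rw_eq: "nbw E ws \<Longrightarrow> ws \<noteq> [] \<Longrightarrow> hd ws = v \<Longrightarrow> last ws = x \<Longrightarrow> x \<in> V \<Longrightarrow> rw x = ws"
  using walk_uniq rw_props by metis

lemma rw_v: "rw v = [v]" using rw_eq[of "[v]" v] vV by simp

definition ch :: "'a \<Rightarrow> 'a \<Rightarrow> bool" where
  "ch a b \<longleftrightarrow> (\<exists>ws. nbw E (ws @ [a, b]) \<and> hd (ws @ [a, b]) = v)"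

lemma ch_E: "ch a b \<Longrightarrow> E a b"
  unfolding ch_def using nbw_suffix by fastforce

lemma ch_V: "ch a b \<Longrightarrow> a \<in> V \<and> b \<in> V" using ch_E EV by blast

lemma ch_rw: assumes "ch a b" shows "rw b = rw a @ [b]"
proof -
  obtain ws where ws: "nbw E (ws @ [a, b])" "hd (ws @ [a, b]) = v" using assms ch_def by blast
  have "rw a = ws @ [a]"
    using ws ch_V[OF assms] nbw_prefix[of E "ws @ [a]" "[b]"] by (intro rw_eq) (auto simp: hd_append)
  moreover have "rw b = ws @ [a, b]" using ws ch_V[OF assms] by (intro rw_eq) auto
  ultimately show ?thesis by simp
qed

definition dep :: "'a \<Rightarrow> nat" where "dep x = length (rw x)"

lemma dep_le: assumes "x \<in> V" shows "dep x \<le> card V" "1 \<le> dep x"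
proof -
  have d: "distinct (rw x)" using rw_props[OF assms] nbw_distinct by blast
  have "set (rw x) \<subseteq> V"
  proof (cases "length (rw x) \<ge> 2")
    case True then show ?thesis using nbw_set rw_props[OF assms] by blast
  next
    case False
    then have "length (rw x) = 1" using rw_props(2)[OF assms]
      by (metis One_nat_def Suc_1 length_0_conv less_2_cases not_le)
    then have "rw x = [last (rw x)]" by (cases "rw x") auto
    then show ?thesis using rw_props(4)[OF assms] assms by (metis empty_subsetI insert_subset list.set(1) list.set(2))
  qed
  then show "dep x \<le> card V" unfolding dep_def using d finV
    by (metis card_mono distinct_card)
  show "1 \<le> dep x" using rw_props(2)[OF assms] by (simp add: dep_def Suc_le_eq)
qed

lemma ch_dep: "ch a b \<Longrightarrow> dep b = Suc (dep a)"
  using ch_rw by (simp add: dep_def)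

lemma ch_not_v: assumes "ch a b" shows "b \<noteq> v"
proof
  assume "b = v"
  have "rw v = [v]" by (rule rw_v)
  then have "dep v = 1" by (simp add: dep_def)
  then show False using ch_dep[OF assms] \<open>b = v\<close> dep_le(2)[of a] ch_V[OF assms] by simp
qed

lemma ch_uniq: "ch a b \<Longrightarrow> ch a' b \<Longrightarrow> a = a'"
  by (metis ch_rw ch_V rw_props(4) butlast_snoc)

lemma ch_asym: "ch a b \<Longrightarrow> \<not> ch b a"
proof
  assume "ch a b" "ch b a"
  from ch_dep[OF this(1)] ch_dep[OF this(2)] show False by simp
qed

lemma ch_total: assumes "E a b" shows "ch a b \<or> ch b a"
proof -
  have aV: "a \<in> V" using EV assms by blast
  note p = rw_props[OF aV]
  show ?thesis
  proof (cases "length (rw a) \<ge> 2 \<and> last (butlast (rw a)) = b")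
    case True
    then obtain as c d where e: "rw a = as @ [c, d]" using split2 by blast
    then have "c = b" "d = a" using True p(4) by (simp_all add: butlast_append)
    then have "ch b a" unfolding ch_def using p e by (intro exI[of _ as]) simp
    then show ?thesis by blast
  next
    case False
    then have "nbw E (rw a @ [b])" using p assms by (simp add: nbw_snoc)
    moreover have "rw a @ [b] = butlast (rw a) @ [a, b]" using p
      by (metis append_butlast_last_id append_Cons append_Nil append_assoc)
    ultimately have "ch a b" unfolding ch_def using p
      by (intro exI[of _ "butlast (rw a)"]) (metis hd_append2)
    then show ?thesis by blast
  qed
qed

lemma has_parent: assumes "b \<in> V" "b \<noteq> v" shows "\<exists>a. ch a b"
proof -
  note p = rw_props[OF assms(1)]
  have "length (rw b) \<ge> 2"
  proof (rule ccontr)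
    assume "\<not> 2 \<le> length (rw b)"
    moreover have "length (rw b) \<noteq> 0" using p by simp
    ultimately have "length (rw b) = 1" by linarith
    then obtain c where "rw b = [c]" by (metis One_nat_def length_0_conv length_Suc_conv)
    then show False using p assms by simp
  qed
  then obtain as c d where e: "rw b = as @ [c, d]" using split2 by blast
  then have "d = b" using p by simp
  then show ?thesis unfolding ch_def using p e by (intro exI[of _ c] exI[of _ as]) simp
qed

lemma ch_v: "E v b \<Longrightarrow> ch v b"
  using ch_total ch_not_v by blast

definition gl :: "'a \<Rightarrow> bool" where "gl x \<longleftrightarrow> is_leaf E x \<and> x \<noteq> v"

lemma glue_eq: "glue E v x = (if gl x then None else Some x)"
  by (simp add: glue_def gl_def)

lemma finN: "finite {y. E x y}"
  using finV EV by (metis (mono_tags, lifting) mem_Collect_eq rev_finite_subset subsetI)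

lemma ch_parent_ng: assumes "ch a b" shows "\<not> gl a"
proof
  assume g: "gl a"
  then have av: "a \<noteq> v" by (simp add: gl_def)
  obtain p where p: "ch p a" using has_parent[OF _ av] ch_V[OF assms] by blast
  have "p \<noteq> b" using p assms ch_asym by blast
  moreover have "E a p" "E a b" using ch_E p assms Esym by blast+
  ultimately have "{p, b} \<subseteq> {y. E a y}" by auto
  then have "card {p, b} \<le> card {y. E a y}" using finN by (rule card_mono[rotated])
  then have "2 \<le> card {y. E a y}" using \<open>p \<noteq> b\<close> by simp
  then show False using g by (simp add: gl_def is_leaf_def)
qed

lemma gl_child: "gl y \<Longrightarrow> E w y \<Longrightarrow> ch w y"
  using ch_total ch_parent_ng by blast

lemma nbrs_split: assumes "ch p x"
  shows "{y. E x y} = insert p {c. ch x c}" "p \<notin> {c. ch x c}"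
proof -
  show "{y. E x y} = insert p {c. ch x c}"
  proof
    show "{y. E x y} \<subseteq> insert p {c. ch x c}"
    proof
      fix y assume "y \<in> {y. E x y}"
      then have "ch x y \<or> ch y x" using ch_total by simp
      then show "y \<in> insert p {c. ch x c}" using ch_uniq assms by blast
    qed
    show "insert p {c. ch x c} \<subseteq> {y. E x y}" using assms ch_E Esym by blast
  qed
  show "p \<notin> {c. ch x c}" using assms ch_asym by blast
qed

lemma nbrs_v: "{y. E v y} = {c. ch v c}"
  using ch_v ch_E by blast

lemma finCh: "finite {c. ch b c}"
  by (rule finite_subset[OF _ finV]) (use ch_V in blast)

primrec Qv :: "nat \<Rightarrow> 'a \<Rightarrow> real" where
  "Qv 0 b = 0"
| "Qv (Suc n) b = (if gl b then 1 else (\<Sum>c\<in>{c. ch b c}. Qv n c) / (1 + (\<Sum>c\<in>{c. ch b c}. Qv n c)))"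

lemma Qv_range: "0 \<le> Qv n b \<and> Qv n b \<le> 1"
proof (induction n arbitrary: b)
  case 0 then show ?case by simp
next
  case (Suc n)
  have "0 \<le> (\<Sum>c\<in>{c. ch b c}. Qv n c)" using Suc by (simp add: sum_nonneg)
  then show ?case by (simp add: divide_le_eq_1)
qed

lemma Qv_stab: "b \<in> V \<Longrightarrow> card V + 1 - dep b \<le> n \<Longrightarrow> Qv n b = Qv (card V + 1 - dep b) b"
proof (induction n arbitrary: b)
  case 0 then show ?case using dep_le[of b] by simp
next
  case (Suc n)
  define K where "K = card V + 1 - dep b"
  have K1: "K \<ge> 1" using dep_le[OF Suc.prems(1)] K_def by simp
  then obtain K' where K': "K = Suc K'" by (cases K) auto
  have "K' \<le> n" using Suc.prems K' K_def by simp
  have ch_eq: "\<And>c. ch b c \<Longrightarrow> Qv n c = Qv K' c"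
  proof -
    fix c assume c: "ch b c"
    have cV: "c \<in> V" using ch_V c by blast
    have "dep c = Suc (dep b)" using ch_dep c by simp
    then have Kc: "card V + 1 - dep c = K'" using K' K_def dep_le[OF cV] by simp
    show "Qv n c = Qv K' c" using Suc.IH[OF cV] Kc \<open>K' \<le> n\<close> by simp
  qed
  have "(\<Sum>c\<in>{c. ch b c}. Qv n c) = (\<Sum>c\<in>{c. ch b c}. Qv K' c)"
    by (rule sum.cong) (auto simp: ch_eq)
  then show ?case unfolding K_def[symmetric] K' by simp
qed

definition q :: "'a \<Rightarrow> real" where "q b = Qv (Suc (card V)) b"

lemma q_range: "0 \<le> q b" "q b \<le> 1" unfolding q_def using Qv_range[of "Suc (card V)" b] by blast+

lemma q_eq: assumes "b \<in> V"
  shows "q b = (if gl b then 1 else (\<Sum>c\<in>{c. ch b c}. q c) / (1 + (\<Sum>c\<in>{c. ch b c}. q c)))"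
proof -
  have "\<And>c. ch b c \<Longrightarrow> Qv (card V) c = q c"
  proof -
    fix c assume c: "ch b c"
    have cV: "c \<in> V" using ch_V c by blast
    have 1: "Qv (card V) c = Qv (card V + 1 - dep c) c"
      by (rule Qv_stab[OF cV]) (use dep_le[OF cV] in simp)
    have 2: "Qv (Suc (card V)) c = Qv (card V + 1 - dep c) c"
      by (rule Qv_stab[OF cV]) simp
    show "Qv (card V) c = q c" unfolding q_def 1 2 ..
  qed
  then have e: "(\<Sum>c\<in>{c. ch b c}. Qv (card V) c) = (\<Sum>c\<in>{c. ch b c}. q c)"
    by (intro sum.cong) auto
  have "q b = (if gl b then 1 else (\<Sum>c\<in>{c. ch b c}. Qv (card V) c) / (1 + (\<Sum>c\<in>{c. ch b c}. Qv (card V) c)))"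
    unfolding q_def by (rule Qv.simps(2))
  then show ?thesis unfolding e .
qed

lemma q_gl: "b \<in> V \<Longrightarrow> gl b \<Longrightarrow> q b = 1" using q_eq[of b] by simp

lemma sumq_nonneg: "0 \<le> (\<Sum>c\<in>A. q c)" using q_range by (simp add: sum_nonneg)

definition anc :: "'a \<Rightarrow> 'a set" where "anc x = {a. a \<noteq> v \<and> ch\<^sup>*\<^sup>* a x}"

definition Pr :: "'a \<Rightarrow> real" where "Pr x = (\<Prod>a\<in>anc x. 1 - q a)"

lemma anc_V: "x \<in> V \<Longrightarrow> anc x \<subseteq> V"
proof
  fix a assume x: "x \<in> V" and "a \<in> anc x"
  then have "ch\<^sup>*\<^sup>* a x" by (simp add: anc_def)
  then show "a \<in> V" using x
    by (induction rule: converse_rtranclp_induct) (auto dest: ch_V)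
qed

lemma ch_rtr_dep: "ch\<^sup>*\<^sup>* a b \<Longrightarrow> dep a \<le> dep b"
  by (induction rule: rtranclp_induct) (auto dest: ch_dep)

lemma anc_v: "anc v = {}"
proof -
  have "\<And>a. ch\<^sup>*\<^sup>* a v \<Longrightarrow> a = v"
    by (erule rtranclp.cases) (auto dest: ch_not_v)
  then show ?thesis by (auto simp: anc_def)
qed

lemma anc_child: assumes "ch x c" shows "anc c = insert c (anc x)" "c \<notin> anc x"
proof -
  have "\<And>a. ch\<^sup>*\<^sup>* a c \<longleftrightarrow> a = c \<or> ch\<^sup>*\<^sup>* a x"
  proof
    fix a assume "ch\<^sup>*\<^sup>* a c"
    then show "a = c \<or> ch\<^sup>*\<^sup>* a x"
      by (cases rule: rtranclp.cases) (use ch_uniq assms in blast)+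
  next
    fix a assume "a = c \<or> ch\<^sup>*\<^sup>* a x"
    then show "ch\<^sup>*\<^sup>* a c" using assms by auto
  qed
  then show "anc c = insert c (anc x)" using ch_not_v[OF assms] by (auto simp: anc_def)
  show "c \<notin> anc x"
  proof
    assume "c \<in> anc x"
    then have "dep c \<le> dep x" using ch_rtr_dep by (simp add: anc_def)
    then show False using ch_dep[OF assms] by simp
  qed
qed

lemma Pr_v: "Pr v = 1" by (simp add: Pr_def anc_v)

lemma Pr_child: assumes "ch x c" shows "Pr c = (1 - q c) * Pr x"
proof -
  have "finite (anc x)" using anc_V ch_V[OF assms] finV finite_subset by blast
  then show ?thesis using anc_child[OF assms] by (simp add: Pr_def)
qed

lemma Pr_range: "0 \<le> Pr x" "Pr x \<le> 1"
  unfolding Pr_def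
  by (rule prod_nonneg, simp add: q_range(2)) (rule prod_le_1, simp_all add: q_range)

end



context tctx begin

lemma has_nbr: "x \<in> V \<Longrightarrow> \<exists>y. E x y"
proof -
  assume x: "x \<in> V"
  obtain w where w: "w \<in> V" "w \<noteq> x"
  proof -
    have "\<not> V \<subseteq> {x}" using card2 finV
      by (metis card.empty card.insert card_mono empty_iff finite.intros(1) not_numeral_le_zero
           numeral_le_one_iff semiring_norm(69) Suc_1 not_less_eq_eq One_nat_def card_1_singleton_iff
           subset_singletonD)
    then show ?thesis using that by blast
  qed
  have "E\<^sup>*\<^sup>* x w" using conn x w by blast
  then show ?thesis using w by (cases rule: converse_rtranclpE) auto
qed

lemma glue_v: "glue E v v = Some v" by (simp add: glue_def)

lemma glue_Some: "glue E v a = Some x \<longleftrightarrow> a = x \<and> \<not> gl x"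
  by (auto simp: glue_eq)

lemma glue_None: "glue E v a = None \<longleftrightarrow> gl a"
  by (auto simp: glue_eq)

definition Q0 :: real where "Q0 = (\<Sum>y\<in>{y. E v y}. q y) / card {y. E v y}"

lemma Q0_nonneg: "0 \<le> Q0" unfolding Q0_def using sumq_nonneg by simp

lemma gl_Pr: assumes "gl y" "E x y" shows "Pr y = 0"
proof -
  have c: "ch x y" using gl_child assms by blast
  have "q y = 1" using q_gl assms EV by blast
  then show ?thesis using Pr_child[OF c] by simp
qed

abbreviation srw where "srw \<equiv> srw_step (T_edges E) (T_tail E v) (T_head E v) (Some v) None"

fun Hs :: "'a option wstate \<Rightarrow> real" where
  "Hs Esc = 1"
| "Hs Ret = 0"
| "Hs (Run t) = (case t of None \<Rightarrow> 0 | Some x \<Rightarrow> if x = v then Q0 else 1 - Pr x)"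

definition fS :: "'a \<times> 'a \<Rightarrow> 'a option wstate" where
  "fS e = (if T_head E v e = Some v then Ret else if T_head E v e = None then Esc else Run (T_head E v e))"

lemma out_eq: assumes "\<not> gl x"
  shows "{e \<in> T_edges E. T_tail E v e = Some x} = (\<lambda>y. (x, y)) ` {y. E x y}"
  using assms by (auto simp: T_edges_def T_tail_def glue_Some)

lemma srw_Run: assumes "x \<in> V" "\<not> gl x"
  shows "srw (Run (Some x)) = map_pmf fS (pmf_of_set ((\<lambda>y. (x, y)) ` {y. E x y}))"
proof -
  have ne: "(\<lambda>y. (x, y)) ` {y. E x y} \<noteq> {}" using has_nbr assms by auto
  show ?thesis unfolding srw_step_def using out_eq[OF assms(2)] ne
    by (auto simp: Let_def fS_def[abs_def])
qed

lemma Hs_fS: assumes "E x y" shows "Hs (fS (x, y)) = 1 - Pr y"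
proof -
  have yV: "y \<in> V" using EV assms by blast
  consider "y = v" | "gl y" | "y \<noteq> v" "\<not> gl y" by blast
  then show ?thesis
  proof cases
    case 1 then show ?thesis by (simp add: fS_def T_head_def glue_v Pr_v)
  next
    case 2
    then have "y \<noteq> v" by (simp add: gl_def)
    then show ?thesis using 2 gl_Pr[OF 2 assms] by (simp add: fS_def T_head_def glue_eq)
  next
    case 3 then show ?thesis by (simp add: fS_def T_head_def glue_eq)
  qed
qed

lemma srw_expect: assumes "x \<in> V" "\<not> gl x"
  shows "measure_pmf.expectation (srw (Run (Some x))) Hs = (\<Sum>y\<in>{y. E x y}. 1 - Pr y) / card {y. E x y}"
proof -
  have inj: "inj_on (\<lambda>y. (x, y)) {y. E x y}" by (auto simp: inj_on_def)
  have ne: "(\<lambda>y. (x, y)) ` {y. E x y} \<noteq> {}" using has_nbr assms by auto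
  have fin: "finite ((\<lambda>y. (x, y)) ` {y. E x y})" using finN by simp
  have "measure_pmf.expectation (srw (Run (Some x))) Hs
      = (\<Sum>e\<in>(\<lambda>y. (x, y)) ` {y. E x y}. Hs (fS e)) / card ((\<lambda>y. (x, y)) ` {y. E x y})"
    unfolding srw_Run[OF assms] by (rule expectation_map_pmf_of_set[OF fin ne])
  also have "\<dots> = (\<Sum>y\<in>{y. E x y}. Hs (fS (x, y))) / card {y. E x y}"
    by (simp add: sum.reindex[OF inj] card_image[OF inj])
  also have "\<dots> = (\<Sum>y\<in>{y. E x y}. 1 - Pr y) / card {y. E x y}"
    using Hs_fS by simp
  finally show ?thesis .
qed

lemma srw_harm: assumes "x \<in> V" "\<not> gl x"
  shows "measure_pmf.expectation (srw (Run (Some x))) Hs = Hs (Run (Some x))"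
proof (cases "x = v")
  case True
  have "(\<Sum>y\<in>{y. E v y}. 1 - Pr y) = (\<Sum>y\<in>{y. E v y}. q y)"
  proof (rule sum.cong)
    fix y assume "y \<in> {y. E v y}"
    then have "ch v y" using ch_v by simp
    then show "1 - Pr y = q y" using Pr_child Pr_v by simp
  qed simp
  then show ?thesis using srw_expect[OF assms] True by (simp add: Q0_def)
next
  case False
  obtain p where p: "ch p x" using has_parent[OF assms(1) False] by blast
  define Ch where "Ch = {c. ch x c}"
  define n where "n = card Ch"
  define C where "C = (\<Sum>c\<in>Ch. q c)"
  define P where "P = Pr p"
  have finC: "finite Ch" using finCh by (simp add: Ch_def)
  have C0: "0 \<le> C" using sumq_nonneg by (simp add: C_def)
  have qx: "q x = C / (1 + C)" using q_eq[OF assms(1)] assms(2) by (simp add: C_def Ch_def)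
  have Prx: "Pr x = (1 - q x) * P" using Pr_child[OF p] by (simp add: P_def)
  have nb: "{y. E x y} = insert p Ch" "p \<notin> Ch" using nbrs_split[OF p] by (simp_all add: Ch_def)
  have cardN: "card {y. E x y} = Suc n" using nb finC by (simp add: n_def)
  have "(\<Sum>y\<in>{y. E x y}. 1 - Pr y) = (1 - P) + (\<Sum>c\<in>Ch. 1 - (1 - q c) * Pr x)"
    using nb finC Pr_child by (simp add: P_def Ch_def)
  also have "(\<Sum>c\<in>Ch. 1 - (1 - q c) * Pr x) = n - Pr x * n + Pr x * C"
    by (simp add: sum_subtractf sum_distrib_left algebra_simps C_def n_def sum.distrib)
  finally have S: "(\<Sum>y\<in>{y. E x y}. 1 - Pr y) = (1 - P) + (n - Pr x * n + Pr x * C)" .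
  have d: "1 + C > 0" using C0 by simp
  have P_eq: "P = Pr x * (1 + C)" using Prx qx d by (simp add: field_simps)
  have "(1 - P) + (n - Pr x * n + Pr x * C) = (1 - Pr x) * (Suc n)"
    unfolding P_eq by (simp add: algebra_simps)
  then have "(\<Sum>y\<in>{y. E x y}. 1 - Pr y) / card {y. E x y} = 1 - Pr x"
    unfolding S cardN by simp
  then show ?thesis using srw_expect[OF assms] False by simp
qed

lemma srw_bound: "Pe srw n (Run (Some v)) \<le> Q0"
proof -
  let ?I = "\<lambda>t. \<exists>x. t = Some x \<and> x \<in> V \<and> \<not> gl x"
  have "?I (Some v) \<Longrightarrow> Pe srw n (Run (Some v)) \<le> Hs (Run (Some v))"
  proof (rule upper_bound[where I = ?I])
    show "srw Esc = return_pmf Esc" "srw Ret = return_pmf Ret" by (simp_all add: srw_step_def)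
    show "Hs Esc \<ge> 1" "Hs Ret \<ge> 0" by simp_all
  next
    fix s s' assume I: "?I s" and s': "s' \<in> set_pmf (srw (Run s))"
    obtain x where x: "s = Some x" "x \<in> V" "\<not> gl x" using I by blast
    then obtain y where y: "E x y" "s' = fS (x, y)" using s' srw_Run[OF x(2,3)] has_nbr finN
      by (auto simp: set_pmf_of_set)
    show "case s' of Run t \<Rightarrow> ?I t | _ \<Rightarrow> True"
      using y EV by (auto simp: fS_def T_head_def glue_eq split: if_splits)
  next
    fix s assume I: "?I s"
    obtain x where x: "s = Some x" "x \<in> V" "\<not> gl x" using I by blast
    show "finite (set_pmf (srw (Run s)))" using srw_Run[OF x(2,3)] x(1) has_nbr[OF x(2)] finN
      by (auto simp: set_pmf_of_set)
    show "Hs (Run s) \<ge> 0" using x Q0_nonneg Pr_range by auto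
    show "measure_pmf.expectation (srw (Run s)) Hs \<le> Hs (Run s)" using srw_harm[OF x(2,3)] x(1) by simp
  qed
  then show ?thesis using vV by (simp add: gl_def)
qed

lemma srw_escape_le: "srw_escape (T_edges E) (T_tail E v) (T_head E v) (glue E v v) None \<le> Q0"
  unfolding srw_escape_def glue_v by (rule escape_le) (rule srw_bound)

end


context tctx begin

definition Qe :: "'a \<times> 'a \<Rightarrow> real" where "Qe e = (if ch (fst e) (snd e) then q (snd e) else 0)"

definition Sb :: "('a \<times> 'a) set \<Rightarrow> ('a option \<Rightarrow> 'a option set) \<Rightarrow> 'a option set \<Rightarrow> real" where
  "Sb R blk B = (\<Sum>e\<in>{e\<in>R. blk (T_tail E v e) = B}. Qe e)"

definition gf :: "real \<Rightarrow> real" where "gf s = s / (1 + s)"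

definition RootOK :: "('a \<times> 'a) set \<Rightarrow> ('a option \<Rightarrow> 'a option set) \<Rightarrow> 'a option set \<Rightarrow> 'a option set \<Rightarrow> bool" where
  "RootOK R blk Bp B \<longleftrightarrow> (\<exists>r. Some r \<in> B \<and> (\<exists>a. ch a r \<and> Some a \<in> Bp) \<and>
      (\<forall>x. Some x \<in> B \<longrightarrow> x \<noteq> r \<longrightarrow> (\<exists>a. ch a x \<and> Some a \<in> B)) \<and> q r \<le> Sb R blk B)"

definition Inv :: "('a \<times> 'a) set \<Rightarrow> ('a option \<Rightarrow> 'a option set) \<Rightarrow> 'a option set list \<Rightarrow> bool" where
  "Inv R blk P \<longleftrightarrow> P \<noteq> [] \<and> hd P = {Some v} \<and> distinct P \<and>
     (\<forall>B\<in>set P. B \<noteq> {} \<and> B \<subseteq> Some ` {x \<in> V. \<not> gl x}) \<and>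
     (\<forall>B1\<in>set P. \<forall>B2\<in>set P. B1 \<noteq> B2 \<longrightarrow> B1 \<inter> B2 = {}) \<and>
     (\<forall>B\<in>set P. \<forall>t\<in>B. blk t = B) \<and>
     (\<forall>t. t \<notin> \<Union>(set P) \<longrightarrow> blk t = {t}) \<and>
     R = {e \<in> T_edges E. \<not> (\<exists>B\<in>set P. T_tail E v e \<in> B \<and> T_head E v e \<in> B)} \<and>
     successively (RootOK R blk) P"

definition PhiP :: "('a \<times> 'a) set \<Rightarrow> ('a option \<Rightarrow> 'a option set) \<Rightarrow> 'a option set list \<Rightarrow> real" where
  "PhiP R blk P = (if tl P = [] then Q0 else 1 - prod_list (map (\<lambda>B. 1 - gf (Sb R blk B)) (tl P)))"

fun Phi :: "(('a \<times> 'a) set \<times> ('a option \<Rightarrow> 'a option set) \<times> 'a option set list) wstate \<Rightarrow> real" where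
  "Phi Esc = 1"
| "Phi Ret = 0"
| "Phi (Run (R, blk, P)) = PhiP R blk P"

definition rk :: "('a \<times> 'a) set \<times> ('a option \<Rightarrow> 'a option set) \<times> 'a option set list \<Rightarrow> nat" where
  "rk s = (case s of (R, blk, P) \<Rightarrow> card R + card (Some ` V - \<Union>(set P)))"

abbreviation lcrw where "lcrw \<equiv> lcrw_step (T_edges E) (T_tail E v) (T_head E v) (Some v) None"

definition Out :: "('a \<times> 'a) set \<Rightarrow> ('a option \<Rightarrow> 'a option set) \<Rightarrow> 'a option set list \<Rightarrow> ('a \<times> 'a) set" where
  "Out R blk P = {e \<in> R. blk (T_tail E v e) = last P}"

definition Fe where
  "Fe R blk P = (\<lambda>e. let h = blk (T_head E v e)
                     in if h = {Some v} then Ret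
                        else if h = {None} then Esc
                             else if h \<in> set P
                                  then let C = set (dropWhile (\<lambda>b. b \<noteq> h) P); vC = \<Union> C
                                       in Run ({e' \<in> R. \<not> (blk (T_tail E v e') \<in> C \<and> blk (T_head E v e') \<in> C)},
                                               \<lambda>x. if blk x \<in> C then vC else blk x,
                                               takeWhile (\<lambda>b. b \<noteq> h) P @ [vC])
                                  else Run (R, blk, P @ [h]))"

lemma lcrw_Run: "lcrw (Run (R, blk, P)) = (if Out R blk P = {} then return_pmf (Run (R, blk, P))
    else map_pmf (Fe R blk P) (pmf_of_set (Out R blk P)))"
  unfolding lcrw_step_def Out_def Fe_def by (simp add: Let_def)

lemma finTed: "finite (T_edges E)"
proof -
  have "T_edges E \<subseteq> V \<times> V" using EV by (auto simp: T_edges_def)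
  then show ?thesis using finV finite_subset by blast
qed

lemma Qe_nonneg: "0 \<le> Qe e" using q_range by (simp add: Qe_def)

lemma Sb_nonneg: "0 \<le> Sb R blk B" unfolding Sb_def using Qe_nonneg by (simp add: sum_nonneg)

lemma gf_range: "0 \<le> s \<Longrightarrow> 0 \<le> gf s \<and> gf s \<le> 1" by (simp add: gf_def)

lemma gf_mono: assumes "0 \<le> s" "s \<le> t" shows "gf s \<le> gf t"
proof -
  have "gf s = 1 - 1/(1+s)" "gf t = 1 - 1/(1+t)" using assms by (simp_all add: gf_def field_simps)
  moreover have "1/(1+t) \<le> 1/(1+s)" using assms by (intro divide_left_mono) auto
  ultimately show ?thesis by simp
qed

lemma gf_one_minus: "0 \<le> s \<Longrightarrow> (1 - gf s) * (1 + s) = 1"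
  by (simp add: gf_def field_simps)

lemma prod_nonneg_gf: "0 \<le> prod_list (map (\<lambda>B. 1 - gf (Sb R blk B)) Ps)"
  by (induction Ps) (auto intro!: mult_nonneg_nonneg simp: gf_range[OF Sb_nonneg])

end

locale lst = tctx +
  fixes R :: "('a \<times> 'a) set" and blk :: "'a option \<Rightarrow> 'a option set" and P :: "'a option set list"
  assumes inv: "Inv R blk P"
begin

lemma inv_conj: "P \<noteq> [] \<and> hd P = {Some v} \<and> distinct P \<and>
     (\<forall>B\<in>set P. B \<noteq> {} \<and> B \<subseteq> Some ` {x \<in> V. \<not> gl x}) \<and>
     (\<forall>B1\<in>set P. \<forall>B2\<in>set P. B1 \<noteq> B2 \<longrightarrow> B1 \<inter> B2 = {}) \<and>
     (\<forall>B\<in>set P. \<forall>t\<in>B. blk t = B) \<and>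
     (\<forall>t. t \<notin> \<Union>(set P) \<longrightarrow> blk t = {t}) \<and>
     R = {e \<in> T_edges E. \<not> (\<exists>B\<in>set P. T_tail E v e \<in> B \<and> T_head E v e \<in> B)} \<and>
     successively (RootOK R blk) P"
  using inv unfolding Inv_def .

lemmas P_ne = conjunct1[OF inv_conj]
lemmas P_hd = conjunct1[OF conjunct2[OF inv_conj]]
lemmas P_dist = conjunct1[OF conjunct2[OF conjunct2[OF inv_conj]]]
lemmas P_blocks = conjunct1[OF conjunct2[OF conjunct2[OF conjunct2[OF inv_conj]]], rule_format]
lemmas P_disj = conjunct1[OF conjunct2[OF conjunct2[OF conjunct2[OF conjunct2[OF inv_conj]]]], rule_format]
lemmas P_blk = conjunct1[OF conjunct2[OF conjunct2[OF conjunct2[OF conjunct2[OF conjunct2[OF inv_conj]]]]], rule_format]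
lemmas P_blk_out = conjunct1[OF conjunct2[OF conjunct2[OF conjunct2[OF conjunct2[OF conjunct2[OF conjunct2[OF inv_conj]]]]]], rule_format]
lemmas R_eq = conjunct1[OF conjunct2[OF conjunct2[OF conjunct2[OF conjunct2[OF conjunct2[OF conjunct2[OF conjunct2[OF inv_conj]]]]]]]]
lemmas P_succ = conjunct2[OF conjunct2[OF conjunct2[OF conjunct2[OF conjunct2[OF conjunct2[OF conjunct2[OF conjunct2[OF inv_conj]]]]]]]]

lemma finR: "finite R" using R_eq finTed by simp

lemma blk_iff: "B \<in> set P \<Longrightarrow> blk t = B \<longleftrightarrow> t \<in> B"
proof
  assume B: "B \<in> set P" and "blk t = B"
  show "t \<in> B"
  proof (cases "t \<in> \<Union>(set P)")
    case True
    then obtain B' where "B' \<in> set P" "t \<in> B'" by blast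
    then show ?thesis using P_blk \<open>blk t = B\<close> by auto
  next
    case False
    then have "blk t = {t}" using P_blk_out by blast
    then show ?thesis using \<open>blk t = B\<close> by auto
  qed
qed (use P_blk in auto)

lemma None_notin: "B \<in> set P \<Longrightarrow> None \<notin> B" using P_blocks[of B] by auto

lemma Some_in_block: "B \<in> set P \<Longrightarrow> t \<in> B \<Longrightarrow> \<exists>x. t = Some x \<and> x \<in> V \<and> \<not> gl x"
  using P_blocks[of B] by auto

lemma hdP_in: "{Some v} \<in> set P" using P_hd P_ne by (metis list.set_sel(1))

lemma tail_in_block: "B \<in> set P \<Longrightarrow> T_tail E v e \<in> B \<Longrightarrow> e \<in> T_edges E \<Longrightarrow>
   Some (fst e) \<in> B \<and> fst e \<in> V \<and> \<not> gl (fst e) \<and> T_tail E v e = Some (fst e)"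
  using Some_in_block unfolding T_tail_def by (fastforce simp: glue_Some)

lemma head_in_block: "B \<in> set P \<Longrightarrow> T_head E v e \<in> B \<Longrightarrow> e \<in> T_edges E \<Longrightarrow>
   Some (snd e) \<in> B \<and> snd e \<in> V \<and> \<not> gl (snd e) \<and> T_head E v e = Some (snd e)"
  using Some_in_block unfolding T_head_def by (fastforce simp: glue_Some)

lemma RootOK_nth: "Suc i < length P \<Longrightarrow> RootOK R blk (P ! i) (P ! Suc i)"
  using P_succ successively_nth by blast

lemma out_basic: assumes "e \<in> Out R blk P"
  shows "Some (fst e) \<in> last P" "fst e \<in> V" "\<not> gl (fst e)" "E (fst e) (snd e)"
    "T_tail E v e = Some (fst e)" "e \<in> R"
proof -
  have eR: "e \<in> R" and bl: "blk (T_tail E v e) = last P" using assms by (auto simp: Out_def)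
  have lP: "last P \<in> set P" using P_ne by simp
  have "T_tail E v e \<in> last P" using blk_iff[OF lP] bl by simp
  moreover have eT: "e \<in> T_edges E" using eR R_eq by blast
  ultimately show "Some (fst e) \<in> last P" "fst e \<in> V" "\<not> gl (fst e)" "T_tail E v e = Some (fst e)"
    using tail_in_block[OF lP] by blast+
  show "E (fst e) (snd e)" using eT by (auto simp: T_edges_def)
  show "e \<in> R" by (rule eR)
qed

lemma out_child: assumes e: "e \<in> Out R blk P" and c: "ch (fst e) (snd e)"
  shows "T_head E v e \<notin> \<Union>(set P)"
proof
  assume "T_head E v e \<in> \<Union>(set P)"
  then obtain B'' where B'': "B'' \<in> set P" "T_head E v e \<in> B''" by blast
  note ob = out_basic[OF e]
  have eT: "e \<in> T_edges E" using ob(6) R_eq by blast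
  have hb: "Some (snd e) \<in> B''" "T_head E v e = Some (snd e)" using head_in_block[OF B''(1,2) eT] by blast+
  obtain j where j: "j < length P" "P ! j = B''" using B''(1) by (auto simp: in_set_conv_nth)
  have lP: "last P \<in> set P" using P_ne by simp
  show False
  proof (cases j)
    case 0
    then have "B'' = {Some v}" using j P_hd P_ne by (simp add: hd_conv_nth)
    then show False using hb ch_not_v[OF c] by simp
  next
    case (Suc j')
    obtain r where r: "Some r \<in> B''" "\<exists>a. ch a r \<and> Some a \<in> P ! j'"
      "\<forall>x. Some x \<in> B'' \<longrightarrow> x \<noteq> r \<longrightarrow> (\<exists>a. ch a x \<and> Some a \<in> B'')"
      using RootOK_nth[of j'] j Suc unfolding RootOK_def by auto
    show False
    proof (cases "snd e = r")
      case False
      then obtain a where a: "ch a (snd e)" "Some a \<in> B''" using r(3) hb by blast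
      then have "a = fst e" using ch_uniq c by blast
      then have "B'' = last P" using a(2) ob(1) P_disj[OF B''(1) lP] by blast
      then have "T_tail E v e \<in> B''" "T_head E v e \<in> B''" using ob(1,5) B''(2) by auto
      then show False using ob(6) R_eq B''(1) by blast
    next
      case True
      then obtain a where a: "ch a (snd e)" "Some a \<in> P ! j'" using r(2) by blast
      then have "a = fst e" using ch_uniq c by blast
      have j'P: "P ! j' \<in> set P" using j Suc by simp
      then have "P ! j' = last P" using a(2) \<open>a = fst e\<close> ob(1) P_disj[OF j'P lP] by blast
      then have "P ! j' = P ! (length P - 1)" using P_ne by (simp add: last_conv_nth)
      then have "j' = length P - 1" using P_dist j Suc by (simp add: nth_eq_iff_index_eq)
      then show False using j Suc by simp
    qed
  qed
qed

lemma out_parent: assumes e: "e \<in> Out R blk P" and c: "ch (snd e) (fst e)"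
  and P2: "P = pre @ [Bp, B]" and r: "Some r \<in> B" "ch a r" "Some a \<in> Bp"
  "\<forall>x. Some x \<in> B \<longrightarrow> x \<noteq> r \<longrightarrow> (\<exists>a. ch a x \<and> Some a \<in> B)"
  shows "fst e = r" "snd e = a"
proof -
  note ob = out_basic[OF e]
  have lB: "last P = B" using P2 by simp
  have BP: "B \<in> set P" using P2 by simp
  show "fst e = r"
  proof (rule ccontr)
    assume "fst e \<noteq> r"
    then obtain a' where a': "ch a' (fst e)" "Some a' \<in> B" using r(4) ob(1) lB by auto
    then have "a' = snd e" using ch_uniq c by blast
    have ng: "\<not> gl (snd e)" using ch_parent_ng c by blast
    then have "T_head E v e = Some (snd e)" by (simp add: T_head_def glue_eq)
    then have "T_tail E v e \<in> B" "T_head E v e \<in> B" using ob(1,5) a'(2) \<open>a' = snd e\<close> lB by auto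
    then show False using ob(6) R_eq BP by blast
  qed
  then show "snd e = a" using ch_uniq c r(2) by blast
qed

lemma P_len1: assumes "tl P = []" shows "P = [{Some v}]"
  using P_ne P_hd assms by (cases P) auto

lemma P_len1_blk: assumes "tl P = []" shows "blk t = {t}"
proof (cases "t = Some v")
  case True then show ?thesis using P_blk[of "{Some v}" t] P_len1[OF assms] by simp
next
  case False then show ?thesis using P_blk_out P_len1[OF assms] by simp
qed

lemma P_len1_R: assumes "tl P = []" shows "R = T_edges E"
proof -
  have "\<not> (T_tail E v e \<in> {Some v} \<and> T_head E v e \<in> {Some v})" if "e \<in> T_edges E" for e
    using that EV by (auto simp: T_edges_def T_tail_def T_head_def glue_Some)
  then show ?thesis using R_eq P_len1[OF assms] by auto
qed

end



lemma frac_le_self: "0 \<le> (C::real) \<Longrightarrow> C / (1 + C) \<le> C"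
proof -
  assume C: "0 \<le> C"
  then have "C \<le> C * (1 + C)" by (simp add: algebra_simps)
  then show ?thesis using C by (simp add: divide_le_eq)
qed

context lst begin

lemma ext_facts: assumes e: "e \<in> Out R blk P" and c: "ch (fst e) (snd e)" and ng: "\<not> gl (snd e)"
  shows "Fe R blk P e = Run (R, blk, P @ [{Some (snd e)}])"
    "Inv R blk (P @ [{Some (snd e)}])"
    "gf (Sb R blk {Some (snd e)}) = q (snd e)"
    "rk (R, blk, P @ [{Some (snd e)}]) < rk (R, blk, P)"
proof -
  define y where "y = snd e"
  note ob = out_basic[OF e]
  have yV: "y \<in> V" using ob(4) EV y_def by blast
  have hd_e: "T_head E v e = Some y" using ng by (simp add: T_head_def glue_eq y_def)
  have ynot: "Some y \<notin> \<Union>(set P)" using out_child[OF e c] hd_e by simp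
  have blky: "blk (Some y) = {Some y}" using P_blk_out ynot by blast
  have yv: "y \<noteq> v" using ch_not_v c y_def by blast
  have ynP: "{Some y} \<notin> set P" using ynot by blast
  show "Fe R blk P e = Run (R, blk, P @ [{Some (snd e)}])"
    unfolding Fe_def Let_def using hd_e blky yv ynP by (simp add: y_def[symmetric])
  have setE: "{e \<in> R. blk (T_tail E v e) = {Some y}} = (\<lambda>z. (y, z)) ` {z. E y z}"
  proof
    show "{e \<in> R. blk (T_tail E v e) = {Some y}} \<subseteq> (\<lambda>z. (y, z)) ` {z. E y z}"
    proof
      fix e' assume e': "e' \<in> {e \<in> R. blk (T_tail E v e) = {Some y}}"
      have "T_tail E v e' \<notin> \<Union>(set P)"
      proof
        assume "T_tail E v e' \<in> \<Union>(set P)"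
        then obtain B' where "B' \<in> set P" "T_tail E v e' \<in> B'" by blast
        then have "blk (T_tail E v e') = B'" using P_blk by blast
        then show False using e' ynot \<open>B' \<in> set P\<close> by auto
      qed
      then have "T_tail E v e' = Some y" using e' P_blk_out by force
      then have "fst e' = y" by (simp add: T_tail_def glue_Some)
      moreover have "e' \<in> T_edges E" using e' R_eq by blast
      then have "E (fst e') (snd e')" by (cases e') (simp add: T_edges_def)
      ultimately show "e' \<in> (\<lambda>z. (y, z)) ` {z. E y z}"
        by (metis (mono_tags, lifting) image_eqI mem_Collect_eq prod.collapse)
    qed
    show "(\<lambda>z. (y, z)) ` {z. E y z} \<subseteq> {e \<in> R. blk (T_tail E v e) = {Some y}}"
    proof
      fix e' assume "e' \<in> (\<lambda>z. (y, z)) ` {z. E y z}"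
      then obtain z where z: "e' = (y, z)" "E y z" by blast
      have tl': "T_tail E v e' = Some y" using z ng by (simp add: T_tail_def glue_eq y_def)
      have eT: "e' \<in> T_edges E" using z by (simp add: T_edges_def)
      have nb: "\<not> (\<exists>B\<in>set P. T_tail E v e' \<in> B \<and> T_head E v e' \<in> B)" using tl' ynot by auto
      have "e' \<in> R" by (subst R_eq) (use eT nb in blast)
      then show "e' \<in> {e \<in> R. blk (T_tail E v e) = {Some y}}" using tl' blky by simp
    qed
  qed
  have inj: "inj_on (\<lambda>z. (y, z)) {z. E y z}" by (auto simp: inj_on_def)
  have "Sb R blk {Some y} = (\<Sum>z\<in>{z. E y z}. Qe (y, z))"
    unfolding Sb_def setE by (simp add: sum.reindex[OF inj])
  also have "\<dots> = (\<Sum>z\<in>{z. E y z}. if ch y z then q z else 0)" by (intro sum.cong) (auto simp: Qe_def)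
  also have "\<dots> = (\<Sum>z\<in>{z \<in> {z. E y z}. ch y z}. q z)" by (rule sum.inter_filter[OF finN, symmetric])
  also have "{z \<in> {z. E y z}. ch y z} = {c. ch y c}" using ch_E by blast
  finally have Sby: "Sb R blk {Some y} = (\<Sum>c\<in>{c. ch y c}. q c)" .
  have qy: "q y = (\<Sum>c\<in>{c. ch y c}. q c) / (1 + (\<Sum>c\<in>{c. ch y c}. q c))"
    using q_eq[OF yV] ng y_def by simp
  show "gf (Sb R blk {Some (snd e)}) = q (snd e)" using Sby qy by (simp add: gf_def y_def)
  have qle: "q y \<le> Sb R blk {Some y}"
  proof -
    have "0 \<le> (\<Sum>c\<in>{c. ch y c}. q c)" by (rule sumq_nonneg)
    then show ?thesis unfolding Sby qy by (rule frac_le_self)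
  qed
  have ngy: "\<not> gl y" using ng y_def by simp
  have R_eq': "R = {e \<in> T_edges E. \<not> (\<exists>B\<in>set (P @ [{Some y}]). T_tail E v e \<in> B \<and> T_head E v e \<in> B)}"
  proof -
    have "\<not> (T_tail E v e' \<in> {Some y} \<and> T_head E v e' \<in> {Some y})" if "e' \<in> T_edges E" for e'
      using that EV by (auto simp: T_edges_def T_tail_def T_head_def glue_Some)
    then show ?thesis using R_eq by auto
  qed
  have rok: "RootOK R blk (last P) {Some y}"
    unfolding RootOK_def using c ob(1) qle y_def by auto
  show "Inv R blk (P @ [{Some (snd e)}])"
    unfolding Inv_def y_def[symmetric]
  proof (intro conjI)
    show "P @ [{Some y}] \<noteq> []" by simp
    show "hd (P @ [{Some y}]) = {Some v}" using P_hd P_ne by simp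
    show "distinct (P @ [{Some y}])" using P_dist ynP by simp
    show "\<forall>B\<in>set (P @ [{Some y}]). B \<noteq> {} \<and> B \<subseteq> Some ` {x \<in> V. \<not> gl x}"
      using P_blocks yV ngy by auto
    show "\<forall>B1\<in>set (P @ [{Some y}]). \<forall>B2\<in>set (P @ [{Some y}]). B1 \<noteq> B2 \<longrightarrow> B1 \<inter> B2 = {}"
      using P_disj ynot by auto
    show "\<forall>B\<in>set (P @ [{Some y}]). \<forall>t\<in>B. blk t = B" using P_blk blky by auto
    show "\<forall>t. t \<notin> \<Union>(set (P @ [{Some y}])) \<longrightarrow> blk t = {t}" using P_blk_out by auto
    show "R = {e \<in> T_edges E. \<not> (\<exists>B\<in>set (P @ [{Some y}]). T_tail E v e \<in> B \<and> T_head E v e \<in> B)}"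
      by (rule R_eq')
    show "successively (RootOK R blk) (P @ [{Some y}])"
      using P_succ rok P_ne by (simp add: successively_append_iff)
  qed
  have mem: "Some y \<in> Some ` V - \<Union>(set P)" using yV ynot by blast
  have eqS: "Some ` V - \<Union>(set (P @ [{Some y}])) = (Some ` V - \<Union>(set P)) - {Some y}" by auto
  have fin: "finite (Some ` V - \<Union>(set P))" using finV by simp
  have "card ((Some ` V - \<Union>(set P)) - {Some y}) < card (Some ` V - \<Union>(set P))"
    by (rule card_Diff1_less[OF fin mem])
  then have "card (Some ` V - \<Union>(set (P @ [{Some y}]))) < card (Some ` V - \<Union>(set P))"
    unfolding eqS .
  then show "rk (R, blk, P @ [{Some (snd e)}]) < rk (R, blk, P)"
    by (simp add: rk_def y_def[symmetric])
qed

lemma glued_child: assumes e: "e \<in> Out R blk P" and g: "gl (snd e)"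
  shows "Fe R blk P e = Esc"
proof -
  have hd_e: "T_head E v e = None" using g by (simp add: T_head_def glue_eq)
  have "None \<notin> \<Union>(set P)" using None_notin by blast
  then have "blk None = {None}" using P_blk_out by blast
  then show ?thesis unfolding Fe_def Let_def using hd_e by simp
qed

lemma parent_ret: assumes e: "e \<in> Out R blk P" and c: "ch (snd e) (fst e)"
  and P2: "P = [Bp, B]"
  shows "Fe R blk P e = Ret"
proof -
  obtain r where r: "Some r \<in> B" "\<exists>a. ch a r \<and> Some a \<in> Bp"
      "\<forall>x. Some x \<in> B \<longrightarrow> x \<noteq> r \<longrightarrow> (\<exists>a. ch a x \<and> Some a \<in> B)"
    using P_succ P2 unfolding RootOK_def by auto
  obtain a where a: "ch a r" "Some a \<in> Bp" using r(2) by blast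
  have "snd e = a" using out_parent[OF e c _ r(1) a r(3), of "[]"] P2 by simp
  moreover have "Bp = {Some v}" using P_hd P2 by simp
  ultimately have "snd e = v" using a by simp
  then have "T_head E v e = Some v" by (simp add: T_head_def glue_v)
  moreover have "blk (Some v) = {Some v}" using P_blk hdP_in by blast
  ultimately show ?thesis unfolding Fe_def Let_def by simp
qed

end


lemma sum_split_pred: "finite A \<Longrightarrow> sum f {x\<in>A. p x} = sum f {x\<in>A. p x \<and> r x} + sum f {x\<in>A. p x \<and> \<not> r x}"
proof -
  assume fA: "finite A"
  have "{x\<in>A. p x} = {x\<in>A. p x \<and> r x} \<union> {x\<in>A. p x \<and> \<not> r x}" by auto
  moreover have "{x\<in>A. p x \<and> r x} \<inter> {x\<in>A. p x \<and> \<not> r x} = {}" by auto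
  ultimately show ?thesis using fA by (simp add: sum.union_disjoint)
qed

context lst begin

lemma contract_facts:
  assumes e: "e \<in> Out R blk P" and c: "ch (snd e) (fst e)"
  and P2: "P = pre @ [Bp, B]" and pre: "pre \<noteq> []"
  defines "R' \<equiv> {e' \<in> R. \<not> (blk (T_tail E v e') \<in> {Bp, B} \<and> blk (T_head E v e') \<in> {Bp, B})}"
  and "blk' \<equiv> (\<lambda>x. if blk x \<in> {Bp, B} then Bp \<union> B else blk x)"
  shows "Fe R blk P e = Run (R', blk', pre @ [Bp \<union> B])"
    "Inv R' blk' (pre @ [Bp \<union> B])"
    "rk (R', blk', pre @ [Bp \<union> B]) < rk (R, blk, P)"
    "Sb R blk Bp \<le> Sb R' blk' (Bp \<union> B)"
    "\<forall>B''\<in>set pre. Sb R' blk' B'' = Sb R blk B''"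
proof -
  note ob = out_basic[OF e]
  have BpP: "Bp \<in> set P" and BP: "B \<in> set P" using P2 by auto
  have dist: "distinct pre" "Bp \<notin> set pre" "B \<notin> set pre" "Bp \<noteq> B" using P_dist P2 by auto
  have disj: "Bp \<inter> B = {}" using P_disj[OF BpP BP dist(4)] .
  have ne: "Bp \<noteq> {}" "B \<noteq> {}" using P_blocks BpP BP by auto
  have lpre: "last pre \<in> set pre" using pre by simp
  have lpreP: "last pre \<in> set P" using lpre P2 by simp
  have succ: "successively (RootOK R blk) pre" "RootOK R blk (last pre) Bp" "RootOK R blk Bp B"
    using P_succ P2 pre by (simp_all add: successively_append_iff)
  obtain r a where ra: "Some r \<in> B" "ch a r" "Some a \<in> Bp"
      "\<forall>x. Some x \<in> B \<longrightarrow> x \<noteq> r \<longrightarrow> (\<exists>a. ch a x \<and> Some a \<in> B)" "q r \<le> Sb R blk B"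
    using succ(3) unfolding RootOK_def by blast
  obtain rp ap where rpa: "Some rp \<in> Bp" "ch ap rp" "Some ap \<in> last pre"
      "\<forall>x. Some x \<in> Bp \<longrightarrow> x \<noteq> rp \<longrightarrow> (\<exists>a. ch a x \<and> Some a \<in> Bp)" "q rp \<le> Sb R blk Bp"
    using succ(2) unfolding RootOK_def by blast
  have er: "fst e = r" "snd e = a" using out_parent[OF e c P2 ra(1-4)] by blast+
  have ang: "\<not> gl a" using ch_parent_ng ra(2) by blast
  have hd_e: "T_head E v e = Some a" using ang er by (simp add: T_head_def glue_eq)
  have blka: "blk (Some a) = Bp" using P_blk[OF BpP ra(3)] .
  have hdpre: "hd pre = {Some v}" using P_hd P2 pre by simp
  have Bpv: "Bp \<noteq> {Some v}" using hdpre dist(2) pre hd_in_set by metis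
  have BpN: "Bp \<noteq> {None}" using None_notin[OF BpP] by auto
  have dW: "dropWhile (\<lambda>b. b \<noteq> Bp) P = [Bp, B]" using P2 dist(2) by (auto simp: dropWhile_append)
  have tW: "takeWhile (\<lambda>b. b \<noteq> Bp) P = pre" using P2 dist(2) by (auto simp: takeWhile_append)
  show "Fe R blk P e = Run (R', blk', pre @ [Bp \<union> B])"
  proof -
    have u: "\<Union>(set [Bp, B]) = Bp \<union> B" by auto
    show ?thesis unfolding Fe_def Let_def hd_e blka dW tW R'_def blk'_def u using Bpv BpN BpP by simp
  qed
  have blkC: "\<And>t. blk t \<in> {Bp, B} \<longleftrightarrow> t \<in> Bp \<union> B"
    using blk_iff[OF BpP] blk_iff[OF BP] by blast
  have vCnot: "Bp \<union> B \<notin> set pre"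
  proof
    assume h: "Bp \<union> B \<in> set pre"
    then have ne': "Bp \<union> B \<noteq> Bp" using dist(2) by auto
    have "Bp \<union> B \<in> set P" using h P2 by simp
    then have "(Bp \<union> B) \<inter> Bp = {}" using P_disj[of "Bp \<union> B" Bp] BpP ne' by blast
    then show False using ne by auto
  qed
  have preC: "\<And>B''. B'' \<in> set pre \<Longrightarrow> B'' \<notin> {Bp, B}" using dist by auto
  have blk'_vC: "\<And>t. blk' t = Bp \<union> B \<longleftrightarrow> t \<in> Bp \<union> B"
  proof -
    fix t
    show "blk' t = Bp \<union> B \<longleftrightarrow> t \<in> Bp \<union> B"
    proof (cases "blk t \<in> {Bp, B}")
      case True then show ?thesis using blkC by (simp add: blk'_def)
    next
      case False
      then have tn: "t \<notin> Bp \<union> B" using blkC by blast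
      have "blk t \<noteq> Bp \<union> B"
      proof
        assume eq: "blk t = Bp \<union> B"
        show False
        proof (cases "t \<in> \<Union>(set P)")
          case True
          then obtain B' where B': "B' \<in> set P" "t \<in> B'" by blast
          then have "blk t = B'" using P_blk by blast
          then have "B' \<in> set pre" using B' P2 eq False by auto
          then show False using vCnot eq \<open>blk t = B'\<close> by simp
        next
          case False
          then have "blk t = {t}" using P_blk_out by blast
          then have "Bp \<union> B = {t}" using eq by simp
          then have "Bp = {t}" "B = {t}" using ne by (auto simp: Un_singleton_iff)
          then show False using dist(4) by simp
        qed
      qed
      then show ?thesis using False tn by (simp add: blk'_def)
    qed
  qed
  have blk'_pre: "\<And>t B''. B'' \<in> set pre \<Longrightarrow> blk' t = B'' \<longleftrightarrow> blk t = B''"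
  proof -
    fix t B'' assume B'': "B'' \<in> set pre"
    show "blk' t = B'' \<longleftrightarrow> blk t = B''"
    proof (cases "blk t \<in> {Bp, B}")
      case True then show ?thesis using vCnot B'' preC[OF B''] by (auto simp: blk'_def)
    next
      case False then show ?thesis by (simp add: blk'_def)
    qed
  qed
  show S5: "\<forall>B''\<in>set pre. Sb R' blk' B'' = Sb R blk B''"
  proof
    fix B'' assume B'': "B'' \<in> set pre"
    have "{e' \<in> R'. blk' (T_tail E v e') = B''} = {e' \<in> R. blk (T_tail E v e') = B''}"
      using blk'_pre[OF B''] preC[OF B''] by (auto simp: R'_def)
    then show "Sb R' blk' B'' = Sb R blk B''" by (simp add: Sb_def)
  qed
  let ?T = "T_tail E v" and ?H = "T_head E v"
  have SbBp: "Sb R blk Bp = sum Qe {e' \<in> R. ?T e' \<in> Bp}"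
    unfolding Sb_def using blk_iff[OF BpP] by simp
  have SbB: "Sb R blk B = sum Qe {e' \<in> R. ?T e' \<in> B}"
    unfolding Sb_def using blk_iff[OF BP] by simp
  have SbvC: "Sb R' blk' (Bp \<union> B) = sum Qe {e' \<in> R. ?T e' \<in> Bp \<union> B \<and> ?H e' \<notin> Bp \<union> B}"
  proof -
    have "{e' \<in> R'. blk' (?T e') = Bp \<union> B} = {e' \<in> R. ?T e' \<in> Bp \<union> B \<and> ?H e' \<notin> Bp \<union> B}"
      using blk'_vC blkC by (auto simp: R'_def)
    then show ?thesis by (simp add: Sb_def)
  qed
  have noBpBp: "\<And>e'. e' \<in> R \<Longrightarrow> ?T e' \<in> Bp \<Longrightarrow> ?H e' \<notin> Bp" using R_eq BpP by blast
  have noBB: "\<And>e'. e' \<in> R \<Longrightarrow> ?T e' \<in> B \<Longrightarrow> ?H e' \<notin> B" using R_eq BP by blast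
  have eTed: "\<And>e'. e' \<in> R \<Longrightarrow> e' \<in> T_edges E" using R_eq by blast
  have X1: "sum Qe {e' \<in> R. ?T e' \<in> Bp \<and> ?H e' \<in> B} \<le> q r"
  proof -
    let ?X = "{e' \<in> R. ?T e' \<in> Bp \<and> ?H e' \<in> B}"
    have z: "\<And>e'. e' \<in> ?X \<Longrightarrow> e' \<noteq> (a, r) \<Longrightarrow> Qe e' = 0"
    proof -
      fix e' assume e': "e' \<in> ?X" "e' \<noteq> (a, r)"
      show "Qe e' = 0"
      proof (rule ccontr)
        assume "Qe e' \<noteq> 0"
        then have ce: "ch (fst e') (snd e')" by (simp add: Qe_def split: if_splits)
        have t: "Some (fst e') \<in> Bp" using tail_in_block[OF BpP] e' eTed by blast
        have h: "Some (snd e') \<in> B" using head_in_block[OF BP] e' eTed by blast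
        show False
        proof (cases "snd e' = r")
          case True
          then have "fst e' = a" using ch_uniq ce ra(2) by blast
          then show False using True e'(2) by (cases e') auto
        next
          case False
          then obtain a'' where "ch a'' (snd e')" "Some a'' \<in> B" using ra(4) h by blast
          then have "a'' = fst e'" using ch_uniq ce by blast
          then show False using t \<open>Some a'' \<in> B\<close> disj by blast
        qed
      qed
    qed
    have fX: "finite ?X" using finR by simp
    have "sum Qe ?X = sum Qe (?X \<inter> {(a, r)})"
      by (rule sum.mono_neutral_right[OF fX]) (use z in auto)
    also have "\<dots> \<le> sum Qe {(a, r)}"
      by (rule sum_mono2) (auto simp: Qe_nonneg)
    also have "\<dots> = q r" using ra(2) by (simp add: Qe_def)
    finally show ?thesis .
  qed
  have X3: "sum Qe {e' \<in> R. ?T e' \<in> B \<and> ?H e' \<in> Bp} = 0"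
  proof (rule sum.neutral, rule ballI)
    fix e' assume e': "e' \<in> {e' \<in> R. ?T e' \<in> B \<and> ?H e' \<in> Bp}"
    show "Qe e' = 0"
    proof (rule ccontr)
      assume "Qe e' \<noteq> 0"
      then have ce: "ch (fst e') (snd e')" by (simp add: Qe_def split: if_splits)
      have t: "Some (fst e') \<in> B" using tail_in_block[OF BP] e' eTed by blast
      have h: "Some (snd e') \<in> Bp" using head_in_block[OF BpP] e' eTed by blast
      show False
      proof (cases "snd e' = rp")
        case True
        then have "fst e' = ap" using ch_uniq ce rpa(2) by blast
        then have "Some (fst e') \<in> last pre" using rpa(3) by simp
        moreover have "last pre \<inter> B = {}" using P_disj[OF lpreP BP] lpre dist(3) by blast
        ultimately show False using t by blast
      next
        case False
        then obtain a'' where "ch a'' (snd e')" "Some a'' \<in> Bp" using rpa(4) h by blast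
        then have "a'' = fst e'" using ch_uniq ce by blast
        then show False using t \<open>Some a'' \<in> Bp\<close> disj by blast
      qed
    qed
  qed
  have fR: "finite R" by (rule finR)
  have A1: "Sb R blk Bp = sum Qe {e' \<in> R. ?T e' \<in> Bp \<and> ?H e' \<notin> Bp \<union> B} + sum Qe {e' \<in> R. ?T e' \<in> Bp \<and> ?H e' \<in> B}"
  proof -
    have "Sb R blk Bp = sum Qe {e' \<in> R. ?T e' \<in> Bp \<and> ?H e' \<in> Bp \<union> B} + sum Qe {e' \<in> R. ?T e' \<in> Bp \<and> \<not> ?H e' \<in> Bp \<union> B}"
      unfolding SbBp by (rule sum_split_pred[OF fR])
    moreover have "{e' \<in> R. ?T e' \<in> Bp \<and> ?H e' \<in> Bp \<union> B} = {e' \<in> R. ?T e' \<in> Bp \<and> ?H e' \<in> B}"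
      using noBpBp by blast
    ultimately show ?thesis by simp
  qed
  have A2: "Sb R blk B = sum Qe {e' \<in> R. ?T e' \<in> B \<and> ?H e' \<notin> Bp \<union> B}"
  proof -
    have "Sb R blk B = sum Qe {e' \<in> R. ?T e' \<in> B \<and> ?H e' \<in> Bp \<union> B} + sum Qe {e' \<in> R. ?T e' \<in> B \<and> \<not> ?H e' \<in> Bp \<union> B}"
      unfolding SbB by (rule sum_split_pred[OF fR])
    moreover have "{e' \<in> R. ?T e' \<in> B \<and> ?H e' \<in> Bp \<union> B} = {e' \<in> R. ?T e' \<in> B \<and> ?H e' \<in> Bp}"
      using noBB by blast
    ultimately show ?thesis using X3 by simp
  qed
  have A3: "Sb R' blk' (Bp \<union> B) = sum Qe {e' \<in> R. ?T e' \<in> Bp \<and> ?H e' \<notin> Bp \<union> B} + sum Qe {e' \<in> R. ?T e' \<in> B \<and> ?H e' \<notin> Bp \<union> B}"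
  proof -
    have "Sb R' blk' (Bp \<union> B) = sum Qe {e' \<in> R. (?T e' \<in> Bp \<union> B \<and> ?H e' \<notin> Bp \<union> B) \<and> ?T e' \<in> Bp} + sum Qe {e' \<in> R. (?T e' \<in> Bp \<union> B \<and> ?H e' \<notin> Bp \<union> B) \<and> \<not> ?T e' \<in> Bp}"
      unfolding SbvC by (rule sum_split_pred[OF fR])
    moreover have "{e' \<in> R. (?T e' \<in> Bp \<union> B \<and> ?H e' \<notin> Bp \<union> B) \<and> ?T e' \<in> Bp} = {e' \<in> R. ?T e' \<in> Bp \<and> ?H e' \<notin> Bp \<union> B}" by blast
    moreover have "{e' \<in> R. (?T e' \<in> Bp \<union> B \<and> ?H e' \<notin> Bp \<union> B) \<and> \<not> ?T e' \<in> Bp} = {e' \<in> R. ?T e' \<in> B \<and> ?H e' \<notin> Bp \<union> B}" using disj by blast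
    ultimately show ?thesis by simp
  qed
  show S4: "Sb R blk Bp \<le> Sb R' blk' (Bp \<union> B)" using A1 A2 A3 X1 ra(5) by linarith
  have eR': "e \<notin> R'"
  proof -
    have "blk (?T e) = B" using e P2 by (simp add: Out_def)
    moreover have "blk (?H e) = Bp" using hd_e blka by simp
    ultimately show ?thesis by (simp add: R'_def)
  qed
  have "R' \<subset> R" using ob(6) eR' by (auto simp: R'_def)
  then have "card R' < card R" using finR psubset_card_mono by blast
  moreover have "\<Union>(set (pre @ [Bp \<union> B])) = \<Union>(set P)" using P2 by auto
  ultimately show "rk (R', blk', pre @ [Bp \<union> B]) < rk (R, blk, P)" by (simp add: rk_def)
  show "Inv R' blk' (pre @ [Bp \<union> B])"
    unfolding Inv_def
  proof (intro conjI)
    show "pre @ [Bp \<union> B] \<noteq> []" by simp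
    show "hd (pre @ [Bp \<union> B]) = {Some v}" using hdpre pre by simp
    show "distinct (pre @ [Bp \<union> B])" using dist vCnot by simp
    show "\<forall>B'\<in>set (pre @ [Bp \<union> B]). B' \<noteq> {} \<and> B' \<subseteq> Some ` {x \<in> V. \<not> gl x}"
      using P_blocks P2 by auto
    show "\<forall>B1\<in>set (pre @ [Bp \<union> B]). \<forall>B2\<in>set (pre @ [Bp \<union> B]). B1 \<noteq> B2 \<longrightarrow> B1 \<inter> B2 = {}"
    proof (intro ballI impI)
      fix B1 B2 assume B1: "B1 \<in> set (pre @ [Bp \<union> B])" and B2: "B2 \<in> set (pre @ [Bp \<union> B])" and "B1 \<noteq> B2"
      have d: "\<And>X Y. X \<in> set P \<Longrightarrow> Y \<in> set P \<Longrightarrow> X \<noteq> Y \<Longrightarrow> X \<inter> Y = {}" using P_disj by blast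
      have "\<And>X. X \<in> set pre \<Longrightarrow> X \<inter> (Bp \<union> B) = {}"
        using d P2 dist by (metis Int_Un_distrib Un_empty in_set_conv_decomp list.set_intros(1)
            append_Cons set_append UnCI list.set_intros(2))
      note pv = this
      have inP: "\<And>X. X \<in> set pre \<Longrightarrow> X \<in> set P" using P2 by simp
      consider "B1 \<in> set pre" "B2 \<in> set pre" | "B1 = Bp \<union> B" "B2 \<in> set pre"
        | "B1 \<in> set pre" "B2 = Bp \<union> B" | "B1 = Bp \<union> B" "B2 = Bp \<union> B" using B1 B2 by auto
      then show "B1 \<inter> B2 = {}"
      proof cases
        case 1 then show ?thesis using d[OF inP inP] \<open>B1 \<noteq> B2\<close> by blast
      next
        case 2 then show ?thesis using pv by blast
      next
        case 3 then show ?thesis using pv by blast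
      next
        case 4 then show ?thesis using \<open>B1 \<noteq> B2\<close> by simp
      qed
    qed
    show "\<forall>B'\<in>set (pre @ [Bp \<union> B]). \<forall>t\<in>B'. blk' t = B'"
    proof (intro ballI)
      fix B' t assume B': "B' \<in> set (pre @ [Bp \<union> B])" and t: "t \<in> B'"
      show "blk' t = B'"
      proof (cases "B' = Bp \<union> B")
        case True then show ?thesis using blk'_vC t by simp
      next
        case False
        then have "B' \<in> set pre" using B' by simp
        then show ?thesis using blk'_pre P_blk P2 t by auto
      qed
    qed
    show "\<forall>t. t \<notin> \<Union>(set (pre @ [Bp \<union> B])) \<longrightarrow> blk' t = {t}"
    proof (intro allI impI)
      fix t assume "t \<notin> \<Union>(set (pre @ [Bp \<union> B]))"
      then have tn: "t \<notin> \<Union>(set P)" using P2 by auto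
      then have "blk t = {t}" using P_blk_out by blast
      moreover have "t \<notin> Bp \<union> B" using tn BpP BP by blast
      ultimately show "blk' t = {t}" using blkC by (simp add: blk'_def)
    qed
    show "R' = {e \<in> T_edges E. \<not> (\<exists>B'\<in>set (pre @ [Bp \<union> B]). ?T e \<in> B' \<and> ?H e \<in> B')}"
    proof -
      have "R' = {e' \<in> R. \<not> (?T e' \<in> Bp \<union> B \<and> ?H e' \<in> Bp \<union> B)}"
        unfolding R'_def using blkC by simp
      also have "\<dots> = {e \<in> T_edges E. \<not> (\<exists>B'\<in>set (pre @ [Bp \<union> B]). ?T e \<in> B' \<and> ?H e \<in> B')}"
        by (subst R_eq) (auto simp: P2)
      finally show ?thesis .
    qed
    show "successively (RootOK R' blk') (pre @ [Bp \<union> B])"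
    proof -
      have s1: "successively (RootOK R' blk') pre"
      proof (rule successively_mono[OF succ(1)])
        fix X Y assume "X \<in> set pre" "Y \<in> set pre" "RootOK R blk X Y"
        then show "RootOK R' blk' X Y" using S5 by (simp add: RootOK_def)
      qed
      have s2: "RootOK R' blk' (last pre) (Bp \<union> B)"
        unfolding RootOK_def
      proof (rule exI[of _ rp], intro conjI)
        show "Some rp \<in> Bp \<union> B" using rpa(1) by simp
        show "\<exists>a. ch a rp \<and> Some a \<in> last pre" using rpa(2,3) by blast
        show "q rp \<le> Sb R' blk' (Bp \<union> B)" using rpa(5) S4 by linarith
        show "\<forall>x. Some x \<in> Bp \<union> B \<longrightarrow> x \<noteq> rp \<longrightarrow> (\<exists>a. ch a x \<and> Some a \<in> Bp \<union> B)"
        proof (intro allI impI)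
          fix x assume x: "Some x \<in> Bp \<union> B" "x \<noteq> rp"
          show "\<exists>a. ch a x \<and> Some a \<in> Bp \<union> B"
          proof (cases "Some x \<in> Bp")
            case True then show ?thesis using rpa(4) x by blast
          next
            case False
            then have "Some x \<in> B" using x by blast
            then show ?thesis using ra(2,3,4) by (cases "x = r") blast+
          qed
        qed
      qed
      show ?thesis using s1 s2 pre by (simp add: successively_append_iff)
    qed
  qed
qed

end


lemma tl_len: "tl xs = [] \<longleftrightarrow> length xs \<le> 1"
  by (cases xs) (auto simp: Suc_le_eq)

context lst begin

lemma parent_len: assumes e: "e \<in> Out R blk P" and c: "ch (snd e) (fst e)"
  shows "\<exists>pre Bp B. P = pre @ [Bp, B]"
proof -
  have "length P \<ge> 2"
  proof (rule ccontr)
    assume "\<not> length P \<ge> 2"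
    then have "length P \<le> 1" by simp
    then have "tl P = []" using tl_len[of P] by simp
    then have "P = [{Some v}]" by (rule P_len1)
    then have "fst e = v" using out_basic(1)[OF e] by simp
    then show False using ch_not_v c by blast
  qed
  then show ?thesis using split2 by blast
qed

lemma par_card: "card {e \<in> Out R blk P. ch (snd e) (fst e)} \<le> 1"
proof (cases "\<exists>pre Bp B. P = pre @ [Bp, B]")
  case False
  have eq: "{e \<in> Out R blk P. ch (snd e) (fst e)} = {}" using parent_len False by blast
  show ?thesis unfolding eq by simp
next
  case True
  then obtain pre Bp B where P2: "P = pre @ [Bp, B]" by blast
  have "RootOK R blk Bp B" using P_succ P2 by (simp add: successively_append_iff)
  then obtain r a where ra: "Some r \<in> B" "ch a r" "Some a \<in> Bp"
      "\<forall>x. Some x \<in> B \<longrightarrow> x \<noteq> r \<longrightarrow> (\<exists>a. ch a x \<and> Some a \<in> B)"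
    unfolding RootOK_def by blast
  have "{e \<in> Out R blk P. ch (snd e) (fst e)} \<subseteq> {(r, a)}"
  proof
    fix e assume "e \<in> {e \<in> Out R blk P. ch (snd e) (fst e)}"
    then have "fst e = r" "snd e = a" using out_parent[OF _ _ P2 ra] by blast+
    then show "e \<in> {(r, a)}" by (cases e) auto
  qed
  then have "card {e \<in> Out R blk P. ch (snd e) (fst e)} \<le> card {(r, a)}" by (rule card_mono[rotated]) simp
  then show ?thesis by simp
qed

lemma finOut: "finite (Out R blk P)" using finR by (simp add: Out_def)

lemma Out_ne: "Out R blk P \<noteq> {}"
proof (cases "tl P = []")
  case True
  then have P1: "P = [{Some v}]" and R1: "R = T_edges E" and b1: "\<And>t. blk t = {t}"
    using P_len1 P_len1_R P_len1_blk by auto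
  obtain y where "E v y" using has_nbr vV by blast
  moreover have "\<not> gl v" by (simp add: gl_def)
  ultimately have "(v, y) \<in> Out R blk P" using P1 R1 b1
    by (simp add: Out_def T_edges_def T_tail_def glue_eq)
  then show ?thesis by blast
next
  case False
  then have "\<not> length P \<le> 1" using tl_len[of P] by simp
  then have "length P \<ge> 2" by simp
  then obtain pre Bp B where P2: "P = pre @ [Bp, B]" using split2 by blast
  have BpP: "Bp \<in> set P" and BP: "B \<in> set P" using P2 by auto
  have "Bp \<noteq> B" using P_dist P2 by auto
  then have disj: "Bp \<inter> B = {}" using P_disj BpP BP by blast
  have "RootOK R blk Bp B" using P_succ P2 by (simp add: successively_append_iff)
  then obtain r a where ra: "Some r \<in> B" "ch a r" "Some a \<in> Bp"
    unfolding RootOK_def by blast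
  have rng: "\<not> gl r" using P_blocks[OF BP] ra(1) by auto
  have ang: "\<not> gl a" using ch_parent_ng ra(2) by blast
  have tl': "T_tail E v (r, a) = Some r" using rng by (simp add: T_tail_def glue_eq)
  have hd': "T_head E v (r, a) = Some a" using ang by (simp add: T_head_def glue_eq)
  have eT: "(r, a) \<in> T_edges E" using ch_E[OF ra(2)] Esym by (simp add: T_edges_def)
  have nb: "\<not> (\<exists>X\<in>set P. T_tail E v (r, a) \<in> X \<and> T_head E v (r, a) \<in> X)"
  proof
    assume "\<exists>X\<in>set P. T_tail E v (r, a) \<in> X \<and> T_head E v (r, a) \<in> X"
    then obtain X where X: "X \<in> set P" "Some r \<in> X" "Some a \<in> X" using tl' hd' by auto
    have "X = B" using P_disj[OF X(1) BP] X(2) ra(1) by blast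
    then show False using X(3) ra(3) disj by blast
  qed
  have "(r, a) \<in> R" by (subst R_eq) (use eT nb in blast)
  moreover have "blk (T_tail E v (r, a)) = last P" using tl' P_blk[OF BP ra(1)] P2 by simp
  ultimately have "(r, a) \<in> Out R blk P" by (simp add: Out_def)
  then show ?thesis by blast
qed

lemma lcrw_step_eq: "lcrw (Run (R, blk, P)) = map_pmf (Fe R blk P) (pmf_of_set (Out R blk P))"
  using lcrw_Run Out_ne by simp

lemma support: assumes "s' \<in> set_pmf (lcrw (Run (R, blk, P)))"
  shows "case s' of Run t \<Rightarrow> (case t of (R', blk', P') \<Rightarrow> Inv R' blk' P') \<and> rk t < rk (R, blk, P) | _ \<Rightarrow> True"
proof -
  obtain e where e: "e \<in> Out R blk P" and s': "s' = Fe R blk P e"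
    using assms lcrw_step_eq Out_ne finOut by (auto simp: set_pmf_of_set)
  have "ch (fst e) (snd e) \<or> ch (snd e) (fst e)" using ch_total out_basic(4)[OF e] by blast
  then show ?thesis
  proof
    assume c: "ch (fst e) (snd e)"
    show ?thesis
    proof (cases "gl (snd e)")
      case True then show ?thesis using glued_child[OF e] s' by simp
    next
      case False then show ?thesis using ext_facts[OF e c False] s' by simp
    qed
  next
    assume c: "ch (snd e) (fst e)"
    obtain pre Bp B where P2: "P = pre @ [Bp, B]" using parent_len[OF e c] by blast
    show ?thesis
    proof (cases "pre = []")
      case True then show ?thesis using parent_ret[OF e c] P2 s' by simp
    next
      case False then show ?thesis using contract_facts[OF e c P2 False] s' by simp
    qed
  qed
qed

lemma fin_support: "finite (set_pmf (lcrw (Run (R, blk, P))))"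
  using lcrw_step_eq Out_ne finOut by (simp add: set_pmf_of_set)

lemma expect_eq: "measure_pmf.expectation (lcrw (Run (R, blk, P))) Phi
    = (\<Sum>e\<in>Out R blk P. Phi (Fe R blk P e)) / card (Out R blk P)"
  unfolding lcrw_step_eq by (rule expectation_map_pmf_of_set[OF finOut Out_ne])

lemma subharm_start: assumes tP: "tl P = []"
  shows "Phi (Run (R, blk, P)) \<le> measure_pmf.expectation (lcrw (Run (R, blk, P))) Phi"
proof -
  have P1: "P = [{Some v}]" and R1: "R = T_edges E" and b1: "\<And>t. blk t = {t}"
    using P_len1 P_len1_R P_len1_blk tP by auto
  have vng: "\<not> gl v" by (simp add: gl_def)
  have OutE: "Out R blk P = (\<lambda>y. (v, y)) ` {y. E v y}"
    using P1 R1 b1 vng by (auto simp: Out_def T_edges_def T_tail_def glue_eq split: if_splits)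
  have inj: "inj_on (\<lambda>y. (v, y)) {y. E v y}" by (auto simp: inj_on_def)
  have val: "\<And>y. E v y \<Longrightarrow> Phi (Fe R blk P (v, y)) = q y"
  proof -
    fix y assume y: "E v y"
    have e: "(v, y) \<in> Out R blk P" using OutE y by blast
    have c: "ch (fst (v, y)) (snd (v, y))" using ch_v y by simp
    show "Phi (Fe R blk P (v, y)) = q y"
    proof (cases "gl y")
      case True
      then show ?thesis using glued_child[OF e] q_gl EV y by simp
    next
      case False
      then have "Fe R blk P (v, y) = Run (R, blk, P @ [{Some y}])" "gf (Sb R blk {Some y}) = q y"
        using ext_facts[OF e c] by simp_all
      then show ?thesis using P1 by (simp add: PhiP_def)
    qed
  qed
  have "measure_pmf.expectation (lcrw (Run (R, blk, P))) Phi = (\<Sum>y\<in>{y. E v y}. Phi (Fe R blk P (v, y))) / card {y. E v y}"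
    unfolding expect_eq OutE by (simp add: sum.reindex[OF inj] card_image[OF inj])
  also have "\<dots> = Q0" using val by (simp add: Q0_def)
  finally show ?thesis using tP by (simp add: PhiP_def)
qed

lemma subharm_main: assumes tP: "tl P \<noteq> []"
  shows "Phi (Run (R, blk, P)) \<le> measure_pmf.expectation (lcrw (Run (R, blk, P))) Phi"
proof -
  have "\<not> length P \<le> 1" using tP tl_len[of P] by simp
  then have "length P \<ge> 2" by simp
  then obtain pre0 Bp B where P2: "P = pre0 @ [Bp, B]" using split2 by blast
  define f where "f = (\<lambda>X. 1 - gf (Sb R blk X))"
  define A where "A = prod_list (map f (tl (pre0 @ [Bp])))"
  define S where "S = Sb R blk B"
  define G where "G = gf S"
  have S0: "0 \<le> S" using Sb_nonneg by (simp add: S_def)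
  have A0: "0 \<le> A" unfolding A_def f_def by (rule prod_nonneg_gf)
  have G01: "0 \<le> G" "G \<le> 1" using gf_range[OF S0] by (simp_all add: G_def)
  have GS: "(1 - G) * S = G" using S0 by (simp add: G_def gf_def field_simps)
  have tlP: "tl P = tl (pre0 @ [Bp]) @ [B]" using P2 by (cases pre0) auto
  have PhiS: "Phi (Run (R, blk, P)) = 1 - A * (1 - G)"
    using tP tlP by (simp add: PhiP_def A_def G_def S_def f_def)
  define par where "par = (\<lambda>e::'a \<times> 'a. ch (snd e) (fst e))"
  define val where "val = (\<lambda>e. 1 - A * (1 - G) * (1 - Qe e) - (if par e then A * G else 0))"
  have lastP: "last P = B" using P2 by simp
  have per: "\<And>e. e \<in> Out R blk P \<Longrightarrow> val e \<le> Phi (Fe R blk P e)"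
  proof -
    fix e assume e: "e \<in> Out R blk P"
    have "ch (fst e) (snd e) \<or> ch (snd e) (fst e)" using ch_total out_basic(4)[OF e] by blast
    then show "val e \<le> Phi (Fe R blk P e)"
    proof
      assume c: "ch (fst e) (snd e)"
      have np: "\<not> par e" using ch_asym c by (simp add: par_def)
      have Qe_e: "Qe e = q (snd e)" using c by (simp add: Qe_def)
      show ?thesis
      proof (cases "gl (snd e)")
        case True
        have "q (snd e) = 1" using q_gl True EV out_basic(4)[OF e] by blast
        then show ?thesis using glued_child[OF e True] np Qe_e by (simp add: val_def)
      next
        case False
        note ef = ext_facts[OF e c False]
        have "tl (P @ [{Some (snd e)}]) = tl P @ [{Some (snd e)}]" using P_ne by simp
        then have "Phi (Fe R blk P e) = 1 - A * (1 - G) * (1 - q (snd e))"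
          using ef(1,3) tlP by (simp add: PhiP_def A_def G_def S_def f_def algebra_simps)
        then show ?thesis using np Qe_e by (simp add: val_def)
      qed
    next
      assume c: "ch (snd e) (fst e)"
      have pe: "par e" using c by (simp add: par_def)
      have Qe_e: "Qe e = 0" using ch_asym c by (simp add: Qe_def)
      have v1: "val e = 1 - A" using pe Qe_e by (simp add: val_def algebra_simps)
      show ?thesis
      proof (cases "pre0 = []")
        case True
        have "A = 1" using True by (simp add: A_def)
        then show ?thesis using parent_ret[OF e c] P2 True v1 by simp
      next
        case False
        note cf = contract_facts[OF e c P2 False]
        define R' where "R' = {e' \<in> R. \<not> (blk (T_tail E v e') \<in> {Bp, B} \<and> blk (T_head E v e') \<in> {Bp, B})}"
        define blk' where "blk' = (\<lambda>x. if blk x \<in> {Bp, B} then Bp \<union> B else blk x)"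
        have cf1: "Fe R blk P e = Run (R', blk', pre0 @ [Bp \<union> B])" using cf(1) by (simp add: R'_def blk'_def)
        have cf4: "Sb R blk Bp \<le> Sb R' blk' (Bp \<union> B)" using cf(4) by (simp add: R'_def blk'_def)
        have cf5: "\<forall>B''\<in>set pre0. Sb R' blk' B'' = Sb R blk B''" using cf(5) by (simp add: R'_def blk'_def)
        define A' where "A' = prod_list (map f (tl pre0))"
        have A'0: "0 \<le> A'" unfolding A'_def f_def by (rule prod_nonneg_gf)
        have meq: "map (\<lambda>X. 1 - gf (Sb R' blk' X)) (tl pre0) = map f (tl pre0)"
          using cf5 by (auto simp: f_def dest: list.set_sel(2)[OF False])
        have A'eq: "prod_list (map (\<lambda>X. 1 - gf (Sb R' blk' X)) (tl pre0)) = A'"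
          unfolding A'_def meq by (rule refl)
        have AA: "A = A' * f Bp" using False by (simp add: A_def A'_def)
        have tl2: "tl (pre0 @ [Bp \<union> B]) = tl pre0 @ [Bp \<union> B]" using False by simp
        have "Phi (Fe R blk P e) = 1 - A' * (1 - gf (Sb R' blk' (Bp \<union> B)))"
          using cf1 tl2 A'eq by (simp add: PhiP_def)
        moreover have "gf (Sb R blk Bp) \<le> gf (Sb R' blk' (Bp \<union> B))"
          using gf_mono[OF Sb_nonneg cf4] .
        ultimately have "1 - A \<le> Phi (Fe R blk P e)"
          using A'0 AA by (simp add: f_def mult_left_mono)
        then show ?thesis using v1 by simp
      qed
    qed
  qed
  define N where "N = card (Out R blk P)"
  define m where "m = card {e \<in> Out R blk P. par e}"
  have N0: "N > 0" using Out_ne finOut by (simp add: N_def card_gt_0_iff)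
  have m1: "m \<le> 1" using par_card by (simp add: m_def par_def)
  have sumQ: "(\<Sum>e\<in>Out R blk P. Qe e) = S"
    using lastP by (simp add: Out_def Sb_def S_def)
  have sumpar: "(\<Sum>e\<in>Out R blk P. (if par e then A * G else 0)) = A * G * m"
  proof -
    have "(\<Sum>e\<in>Out R blk P. (if par e then A * G else 0)) = (\<Sum>e\<in>{e \<in> Out R blk P. par e}. A * G)"
      by (rule sum.inter_filter[OF finOut, symmetric])
    then show ?thesis by (simp add: m_def)
  qed
  have sumval: "(\<Sum>e\<in>Out R blk P. val e) = N - A * (1 - G) * (N - S) - A * G * m"
  proof -
    have "(\<Sum>e\<in>Out R blk P. val e) = (\<Sum>e\<in>Out R blk P. 1 - A * (1 - G) * (1 - Qe e)) - (\<Sum>e\<in>Out R blk P. (if par e then A * G else 0))"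
      unfolding val_def by (simp add: sum_subtractf)
    also have "(\<Sum>e\<in>Out R blk P. 1 - A * (1 - G) * (1 - Qe e)) = N - A * (1 - G) * (N - S)"
    proof -
      define K where "K = A * (1 - G)"
      have "(\<Sum>e\<in>Out R blk P. 1 - K * (1 - Qe e)) = (\<Sum>e\<in>Out R blk P. 1) - K * (\<Sum>e\<in>Out R blk P. 1 - Qe e)"
        by (simp only: sum_subtractf sum_distrib_left[symmetric])
      also have "(\<Sum>e\<in>Out R blk P. 1 - Qe e) = N - S"
        using sumQ by (simp add: sum_subtractf N_def)
      finally show ?thesis by (simp add: K_def N_def)
    qed
    finally show ?thesis using sumpar by simp
  qed
  have key: "N * (1 - A * (1 - G)) \<le> (\<Sum>e\<in>Out R blk P. val e)"
  proof -
    have "A * G * m \<le> A * G" using m1 A0 G01 by (simp add: mult_left_le)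
    then have "A * G * m \<le> A * (1 - G) * S" using GS by (simp add: mult.assoc)
    then show ?thesis unfolding sumval by (simp add: algebra_simps)
  qed
  also have "\<dots> \<le> (\<Sum>e\<in>Out R blk P. Phi (Fe R blk P e))" by (rule sum_mono) (rule per)
  finally have "1 - A * (1 - G) \<le> (\<Sum>e\<in>Out R blk P. Phi (Fe R blk P e)) / N"
    using N0 by (simp add: le_divide_eq mult.commute)
  then show ?thesis unfolding PhiS expect_eq N_def .
qed

lemma subharm: "Phi (Run (R, blk, P)) \<le> measure_pmf.expectation (lcrw (Run (R, blk, P))) Phi"
  using subharm_start subharm_main by blast

end

context tctx begin

lemma Inv_start: "Inv (T_edges E) (\<lambda>x. {x}) [{Some v}]"
proof -
  have "\<not> gl v" by (simp add: gl_def)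
  moreover have "\<And>e. e \<in> T_edges E \<Longrightarrow> \<not> (T_tail E v e \<in> {Some v} \<and> T_head E v e \<in> {Some v})"
    using EV by (auto simp: T_edges_def T_tail_def T_head_def glue_Some)
  ultimately show ?thesis unfolding Inv_def using vV by auto
qed

lemma lcrw_bound: "Q0 \<le> lcrw_escape (T_edges E) (T_tail E v) (T_head E v) (glue E v v) None"
proof -
  let ?I = "\<lambda>s. case s of (R, blk, P) \<Rightarrow> Inv R blk P"
  let ?s0 = "(T_edges E, \<lambda>x. {x}, [{Some v}])"
  have "?I ?s0 \<Longrightarrow> rk ?s0 < Suc (rk ?s0) \<Longrightarrow> Pe lcrw (Suc (rk ?s0)) (Run ?s0) \<ge> Phi (Run ?s0)"
  proof (rule lower_bound[where I = ?I and rk = rk])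
    show "lcrw Esc = return_pmf Esc" "lcrw Ret = return_pmf Ret" by (simp_all add: lcrw_step_def)
    show "Phi Esc \<le> 1" "Phi Ret \<le> 0" by simp_all
  next
    fix s s' assume I: "?I s" and s': "s' \<in> set_pmf (lcrw (Run s))"
    obtain R blk P where s: "s = (R, blk, P)" by (cases s) auto
    interpret l: lst V E v R blk P using I s by unfold_locales simp
    show "case s' of Run t \<Rightarrow> ?I t \<and> rk t < rk s | _ \<Rightarrow> True"
      unfolding s using l.support[OF s'[unfolded s]] .
  next
    fix s assume I: "?I s"
    obtain R blk P where s: "s = (R, blk, P)" by (cases s) auto
    interpret l: lst V E v R blk P using I s by unfold_locales simp
    show "finite (set_pmf (lcrw (Run s)))" using l.fin_support s by simp
    show "measure_pmf.expectation (lcrw (Run s)) Phi \<ge> Phi (Run s)" using l.subharm s by simp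
  qed
  then have "Phi (Run ?s0) \<le> Pe lcrw (Suc (rk ?s0)) (Run ?s0)" using Inv_start by simp
  moreover have "Phi (Run ?s0) = Q0" by (simp add: PhiP_def)
  ultimately have "Q0 \<le> Pe lcrw (Suc (rk ?s0)) (Run ?s0)" by simp
  then show ?thesis unfolding lcrw_escape_def glue_v by (rule escape_ge)
qed

theorem main: "srw_escape (T_edges E) (T_tail E v) (T_head E v) (glue E v v) None
   \<le> lcrw_escape (T_edges E) (T_tail E v) (T_head E v) (glue E v v) None"
  using srw_escape_le lcrw_bound by linarith

end



theorem mainTheorem7:
  fixes V :: "'a set" and E :: "'a \<Rightarrow> 'a \<Rightarrow> bool" and v :: 'a
  assumes "finite_tree V E" and "v \<in> V" and "2 \<le> card V"
  shows "lcrw_escape (T_edges E) (T_tail E v) (T_head E v) (glue E v v) None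
           \<ge> srw_escape (T_edges E) (T_tail E v) (T_head E v) (glue E v v) None"
proof -
  interpret t: tctx V E v using assms by unfold_locales
  show ?thesis using t.main by simp
qed

end
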